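(* Let $(E,\tau)$ be a locally solid vector lattice, where $\tau$ is an o-Lebesgue topology. The following are equivalent: (1) $C_\tau=E$; (2) $E$ has the countable sup property; (3) every $\tau$-convergent net in $E$ has an embedded sequence that is uo-convergent to the same limit; (4) every increasing $\tau$-convergent net in $E^+$ has an embedded sequence that is uo-convergent to the same limit.
   Context: All vector lattices are real and Archimedean; linear topologies are Hausdorff. A locally solid topology on a vector lattice is a linear topology such that zero has a neighbourhood basis of solid sets. A net $(x_\alpha)$ order converges to $x$ if there is a net $y_\beta\downarrow0$ such that for each $\beta_0$ eventually $|x_\alpha-x|\leq y_{\beta_0}$; it uo-converges to $x$ if $|x_\alpha-x|\wedge|y|$ order converges to $0$ for every $y\in E$. An o-Lebesgue topology is a locally solid topology in which every order convergent net converges topologically to the same limit. A sequence $(V_n)$ of neighbourhoods of zero is normal if $V_{n+1}+V_{n+1}\subseteq V_n$; the carrier $C_\tau$ is the union of the disjoint complements $N^{\mathrm d}$ where $N=\bigcap_nV_n$ ranges over intersections of normal sequences of solid $\tau$-neighbourhoods of zero. $E$ has the countable sup property if every subset with a supremum contains an at most countable subset with the same supremum. Embedded sequence: given a net $(x_\alpha)_{\alpha\in A}$, a sequence $(x_{\alpha_n})_{n\geq1}$ with $\alpha_1\leq\alpha_2\leq\dotsb$, strictly increasing when $A$ has no largest element. *)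

theory Defs
  imports "HOL-Analysis.Analysis"
begin

text \<open>Vector lattices are modelled as types of sort {ordered_real_vector, lattice};
  E is the whole type. Absolute value, sup/inf of subsets are spelled out.\<close>

definition vabs :: "'a::{ordered_real_vector,lattice} \<Rightarrow> 'a" where
  "vabs x = sup x (- x)"

definition archimedean_vl :: "'a::{ordered_real_vector,lattice} itself \<Rightarrow> bool" where
  "archimedean_vl _ \<longleftrightarrow>
     (\<forall>x y :: 'a. 0 \<le> x \<and> (\<forall>n::nat. real n *\<^sub>R x \<le> y) \<longrightarrow> x = 0)"

definition is_sup_of :: "'a::order set \<Rightarrow> 'a \<Rightarrow> bool" where
  "is_sup_of S m \<longleftrightarrow> (\<forall>s\<in>S. s \<le> m) \<and> (\<forall>m'. (\<forall>s\<in>S. s \<le> m') \<longrightarrow> m \<le> m')"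

definition is_inf_of :: "'a::order set \<Rightarrow> 'a \<Rightarrow> bool" where
  "is_inf_of S m \<longleftrightarrow> (\<forall>s\<in>S. m \<le> s) \<and> (\<forall>m'. (\<forall>s\<in>S. m' \<le> s) \<longrightarrow> m' \<le> m)"

definition solid :: "'a::{ordered_real_vector,lattice} set \<Rightarrow> bool" where
  "solid S \<longleftrightarrow> (\<forall>x y. y \<in> S \<and> vabs x \<le> vabs y \<longrightarrow> x \<in> S)"

definition linear_topology :: "'a::{ordered_real_vector,lattice} topology \<Rightarrow> bool" where
  "linear_topology \<tau> \<longleftrightarrow> topspace \<tau> = UNIV \<and> Hausdorff_space \<tau> \<and>
     continuous_map (prod_topology \<tau> \<tau>) \<tau> (\<lambda>(x, y). x + y) \<and>
     continuous_map (prod_topology euclideanreal \<tau>) \<tau> (\<lambda>(c, x). c *\<^sub>R x)"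

definition nbhd0 :: "'a::{ordered_real_vector,lattice} topology \<Rightarrow> 'a set \<Rightarrow> bool" where
  "nbhd0 \<tau> U \<longleftrightarrow> (\<exists>W. openin \<tau> W \<and> 0 \<in> W \<and> W \<subseteq> U)"

definition locally_solid :: "'a::{ordered_real_vector,lattice} topology \<Rightarrow> bool" where
  "locally_solid \<tau> \<longleftrightarrow> linear_topology \<tau> \<and>
     (\<forall>U. nbhd0 \<tau> U \<longrightarrow> (\<exists>V. nbhd0 \<tau> V \<and> solid V \<and> V \<subseteq> U))"

definition directed :: "'i set \<Rightarrow> ('i \<Rightarrow> 'i \<Rightarrow> bool) \<Rightarrow> bool" where
  "directed D le \<longleftrightarrow> D \<noteq> {} \<and> (\<forall>a\<in>D. le a a) \<and>
     (\<forall>a\<in>D. \<forall>b\<in>D. \<forall>c\<in>D. le a b \<and> le b c \<longrightarrow> le a c) \<and>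
     (\<forall>a\<in>D. \<forall>b\<in>D. \<exists>c\<in>D. le a c \<and> le b c)"

definition net_eventually :: "'i set \<Rightarrow> ('i \<Rightarrow> 'i \<Rightarrow> bool) \<Rightarrow> ('i \<Rightarrow> bool) \<Rightarrow> bool" where
  "net_eventually D le P \<longleftrightarrow> (\<exists>a0\<in>D. \<forall>a\<in>D. le a0 a \<longrightarrow> P a)"

definition net_tendsto ::
  "'a topology \<Rightarrow> 'i set \<Rightarrow> ('i \<Rightarrow> 'i \<Rightarrow> bool) \<Rightarrow> ('i \<Rightarrow> 'a) \<Rightarrow> 'a \<Rightarrow> bool" where
  "net_tendsto \<tau> D le x l \<longleftrightarrow>
     (\<forall>U. openin \<tau> U \<and> l \<in> U \<longrightarrow> net_eventually D le (\<lambda>a. x a \<in> U))"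

text \<open>Order convergence. The dominating net y_beta decreasing to 0 is indexed by a subset
  of the type 'a (every decreasing net can be reindexed by its range).\<close>
definition order_conv ::
  "'i set \<Rightarrow> ('i \<Rightarrow> 'i \<Rightarrow> bool) \<Rightarrow> ('i \<Rightarrow> 'a::{ordered_real_vector,lattice}) \<Rightarrow> 'a \<Rightarrow> bool" where
  "order_conv D le x l \<longleftrightarrow>
     (\<exists>(B :: 'a set) leB (y :: 'a \<Rightarrow> 'a).
        directed B leB \<and> (\<forall>b1\<in>B. \<forall>b2\<in>B. leB b1 b2 \<longrightarrow> y b2 \<le> y b1) \<and>
        is_inf_of (y ` B) 0 \<and>
        (\<forall>b\<in>B. net_eventually D le (\<lambda>a. vabs (x a - l) \<le> y b)))"

definition uo_conv ::
  "'i set \<Rightarrow> ('i \<Rightarrow> 'i \<Rightarrow> bool) \<Rightarrow> ('i \<Rightarrow> 'a::{ordered_real_vector,lattice}) \<Rightarrow> 'a \<Rightarrow> bool" where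
  "uo_conv D le x l \<longleftrightarrow>
     (\<forall>u. order_conv D le (\<lambda>a. inf (vabs (x a - l)) (vabs u)) 0)"

definition o_lebesgue :: "'i itself \<Rightarrow> 'a::{ordered_real_vector,lattice} topology \<Rightarrow> bool" where
  "o_lebesgue _ \<tau> \<longleftrightarrow> locally_solid \<tau> \<and>
     (\<forall>(D :: 'i set) le x l. directed D le \<and> order_conv D le x l \<longrightarrow> net_tendsto \<tau> D le x l)"

definition set_plus_vl :: "'a::plus set \<Rightarrow> 'a set \<Rightarrow> 'a set" where
  "set_plus_vl A B = {a + b | a b. a \<in> A \<and> b \<in> B}"

definition normal_solid_seq :: "'a::{ordered_real_vector,lattice} topology \<Rightarrow> (nat \<Rightarrow> 'a set) \<Rightarrow> bool" where
  "normal_solid_seq \<tau> V \<longleftrightarrow> (\<forall>n. nbhd0 \<tau> (V n) \<and> solid (V n) \<and>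
      set_plus_vl (V (Suc n)) (V (Suc n)) \<subseteq> V n)"

definition disj_compl :: "'a::{ordered_real_vector,lattice} set \<Rightarrow> 'a set" where
  "disj_compl N = {x. \<forall>y\<in>N. inf (vabs x) (vabs y) = 0}"

definition carrier_top :: "'a::{ordered_real_vector,lattice} topology \<Rightarrow> 'a set" where
  "carrier_top \<tau> = \<Union>{disj_compl (\<Inter>n. V n) | V. normal_solid_seq \<tau> V}"

definition countable_sup_property :: "'a::{ordered_real_vector,lattice} itself \<Rightarrow> bool" where
  "countable_sup_property _ \<longleftrightarrow>
     (\<forall>(S :: 'a set) m. is_sup_of S m \<longrightarrow> (\<exists>T\<subseteq>S. countable T \<and> is_sup_of T m))"

definition embedded_seq :: "'i set \<Rightarrow> ('i \<Rightarrow> 'i \<Rightarrow> bool) \<Rightarrow> (nat \<Rightarrow> 'i) \<Rightarrow> bool" where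
  "embedded_seq D le s \<longleftrightarrow> (\<forall>n. s n \<in> D \<and> le (s n) (s (Suc n))) \<and>
     ((\<not> (\<exists>m\<in>D. \<forall>a\<in>D. le a m)) \<longrightarrow> (\<forall>n. \<not> le (s (Suc n)) (s n)))"

end

theory Submission
  imports Defs
begin

lemma add_inf_l: "(a::'a::{ordered_real_vector,lattice}) + inf b c = inf (a+b) (a+c)"
proof (rule order.antisym)
  show "inf (a + b) (a + c) \<le> a + inf b c"
    by (metis add.commute diff_le_eq inf_greatest inf_le1 inf_le2)
qed (simp add: add_left_mono)

lemma add_sup_l: "(a::'a::{ordered_real_vector,lattice}) + sup b c = sup (a+b) (a+c)"
proof (rule order.antisym)
  show "a + sup b c \<le> sup (a + b) (a + c)"
    by (metis add.commute le_diff_eq sup.bounded_iff sup_ge1 sup_ge2)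
qed (simp add: add_left_mono)

lemma neg_inf: "- inf a b = sup (- a) (- (b::'a::{ordered_real_vector,lattice}))"
proof (rule order.antisym)
  show "- inf a b \<le> sup (- a) (- b)"
    by (metis inf_greatest minus_le_iff sup_ge1 sup_ge2)
  show "sup (- a) (- b) \<le> - inf a b"
    by (simp add: le_supI)
qed

lemma neg_sup: "- sup a b = inf (- a) (- (b::'a::{ordered_real_vector,lattice}))"
proof -
  have h: "- inf (- a) (- b) = sup a b" using neg_inf[of "-a" "-b"] by simp
  show ?thesis unfolding h[symmetric] by simp
qed

lemma inf_eq_sub: "inf x y = x - sup (x - y) (0::'a::{ordered_real_vector,lattice})"
proof -
  have "x - sup (x - y) 0 = x + inf (y - x) 0"
    using neg_sup[of "x-y" 0] by simp
  also have "\<dots> = inf y x" by (simp add: add_inf_l)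
  finally show ?thesis by (simp add: inf.commute)
qed

lemma add_eq_sup_inf: "(a::'a::{ordered_real_vector,lattice}) + b = sup a b + inf a b"
proof -
  have "a + b - inf a b = a + b + sup (-a) (-b)" using neg_inf[of a b] by simp
  also have "\<dots> = sup b a" by (simp add: add_sup_l)
  finally show ?thesis by (simp add: sup.commute algebra_simps)
qed

lemma disj_sum: "inf a b = 0 \<Longrightarrow> (a::'a::{ordered_real_vector,lattice}) + b = sup a b"
  using add_eq_sup_inf[of a b] by simp

lemma vabs_nonneg: "0 \<le> vabs (x::'a::{ordered_real_vector,lattice})"
proof -
  have "x + (-x) \<le> vabs x + vabs x" unfolding vabs_def
    by (intro add_mono) auto
  then have h: "0 \<le> (2::real) *\<^sub>R vabs x" by (simp add: scaleR_2)
  have eq: "vabs x = (1/2::real) *\<^sub>R ((2::real) *\<^sub>R vabs x)" by simp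
  have "0 \<le> (1/2::real) *\<^sub>R ((2::real) *\<^sub>R vabs x)"
    by (rule scaleR_nonneg_nonneg) (use h in simp_all)
  then show ?thesis using eq by metis
qed

lemma vabs_pos: "0 \<le> x \<Longrightarrow> vabs (x::'a::{ordered_real_vector,lattice}) = x"
proof -
  assume x: "0 \<le> x"
  then have "- x \<le> 0" by simp
  then have "- x \<le> x" using x by (rule order_trans)
  then show ?thesis unfolding vabs_def by (simp add: sup.absorb1)
qed

lemma vabs_vabs[simp]: "vabs (vabs (x::'a::{ordered_real_vector,lattice})) = vabs x"
  by (rule vabs_pos[OF vabs_nonneg])

lemma vabs_minus[simp]: "vabs (- (x::'a::{ordered_real_vector,lattice})) = vabs x"
  unfolding vabs_def by (simp add: sup.commute)

lemma vabs_ge: "(x::'a::{ordered_real_vector,lattice}) \<le> vabs x" "- x \<le> vabs x"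
  unfolding vabs_def by auto

lemma vabs_zero_iff: "vabs (x::'a::{ordered_real_vector,lattice}) = 0 \<longleftrightarrow> x = 0"
proof
  assume h: "vabs x = 0"
  have h1: "x \<le> 0" using vabs_ge(1)[of x] unfolding h .
  have "-x \<le> 0" using vabs_ge(2)[of x] unfolding h .
  then have h2: "0 \<le> x" by simp
  show "x = 0" using h1 h2 by (rule order.antisym)
qed (simp add: vabs_def)

lemma vabs_add: "vabs (a + b) \<le> vabs a + vabs (b::'a::{ordered_real_vector,lattice})"
proof -
  have "a + b \<le> vabs a + vabs b" using vabs_ge[of a] vabs_ge[of b] by (intro add_mono) auto
  moreover have "-(a + b) \<le> vabs a + vabs b"
  proof -
    have "-(a+b) = (-a) + (-b)" by simp
    also have "\<dots> \<le> vabs a + vabs b" using vabs_ge[of a] vabs_ge[of b] by (intro add_mono) auto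
    finally show ?thesis .
  qed
  ultimately show ?thesis unfolding vabs_def[of "a+b"] by simp
qed

lemma riesz:
  fixes x y z :: "'a::{ordered_real_vector,lattice}"
  assumes "0 \<le> x" "0 \<le> y" "0 \<le> z"
  shows "inf x (y + z) \<le> inf x y + inf x z"
proof -
  define r where "r = inf x (y + z)"
  have r1: "r \<le> x" "r \<le> y + z" unfolding r_def by auto
  have a1: "r - y \<le> z" using r1 by (simp add: diff_le_eq add.commute)
  have a2: "r - y \<le> x" using r1(1) assms(2)
    by (metis diff_le_eq le_add_same_cancel1 order_trans add.commute)
  have "r - y \<le> inf x z" using a2 a1 by (rule le_infI)
  then have "r \<le> inf x z + y" by (simp only: diff_le_eq)
  then have b1: "r - inf x z \<le> y" by (simp only: diff_le_eq add.commute)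
  have "0 \<le> inf x z" using assms by simp
  then have b2: "r - inf x z \<le> x" using r1(1)
    by (metis diff_le_eq le_add_same_cancel1 order_trans add.commute)
  have "r - inf x z \<le> inf x y" using b2 b1 by (rule le_infI)
  then have "r \<le> inf x y + inf x z" by (simp only: diff_le_eq)
  then show ?thesis unfolding r_def .
qed

lemma disj_le:
  fixes X Y e :: "'a::{ordered_real_vector,lattice}"
  assumes "0 \<le> X" "0 \<le> Y" "0 \<le> e" "X \<le> Y + e" "inf X e = 0"
  shows "X \<le> Y"
proof -
  have "X = inf X (Y + e)" using assms(4) by (simp add: inf.absorb1)
  also have "\<dots> \<le> inf X Y + inf X e" by (rule riesz) (use assms in auto)
  also have "\<dots> = inf X Y" using assms(5) by simp
  finally show ?thesis by (meson le_inf_iff)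
qed

lemma disj_mult:
  fixes a b :: "'a::{ordered_real_vector,lattice}"
  assumes "0 \<le> a" "0 \<le> b" "inf a b = 0"
  shows "inf a (real k *\<^sub>R b) = 0"
proof (induction k)
  case 0 then show ?case using assms by (simp add: inf.absorb2)
next
  case (Suc k)
  have "real (Suc k) *\<^sub>R b = b + real k *\<^sub>R b" by (simp add: algebra_simps)
  then have "inf a (real (Suc k) *\<^sub>R b) \<le> inf a b + inf a (real k *\<^sub>R b)"
    using riesz[of a b "real k *\<^sub>R b"] assms by (simp add: scaleR_nonneg_nonneg)
  then have "inf a (real (Suc k) *\<^sub>R b) \<le> 0" using Suc assms by simp
  moreover have "0 \<le> inf a (real (Suc k) *\<^sub>R b)" using assms by (simp add: scaleR_nonneg_nonneg)
  ultimately show ?case by (rule order.antisym)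
qed

lemma pos_part_eq: "sup d 0 = d + sup (- d) (0::'a::{ordered_real_vector,lattice})"
  by (simp add: add_sup_l sup.commute)

lemma pos_neg_disj: "inf (sup d 0) (sup (- d) (0::'a::{ordered_real_vector,lattice})) = 0"
proof -
  have "inf (sup d 0) (sup (- d) 0) = sup d 0 - sup (sup d 0 - sup (- d) 0) 0"
    by (rule inf_eq_sub)
  also have "sup d 0 - sup (- d) 0 = d" using pos_part_eq[of d] by (simp add: algebra_simps)
  finally show ?thesis by simp
qed

lemma arch_zero:
  fixes t w :: "'a::{ordered_real_vector,lattice}"
  assumes "archimedean_vl TYPE('a)" "0 \<le> t" "\<And>n. real n *\<^sub>R t \<le> w"
  shows "t = 0"
  using assms unfolding archimedean_vl_def by blast

lemma arch_final:
  fixes a r :: "'a::{ordered_real_vector,lattice}"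
  assumes arch: "archimedean_vl TYPE('a)" and a: "0 \<le> a" and r: "0 \<le> r"
    and h: "\<And>c::nat. inf (a + r) (real c *\<^sub>R r) \<le> a"
  shows "r = 0"
proof (rule arch_zero[OF arch r])
  fix m :: nat
  define d where "d = a - real m *\<^sub>R r"
  have "(a + r) - inf (a + r) (real (Suc m) *\<^sub>R r) \<ge> r" using h[of "Suc m"]
    by (simp add: algebra_simps)
  moreover have "(a + r) - inf (a + r) (real (Suc m) *\<^sub>R r) = sup d 0"
    unfolding inf_eq_sub[of "a+r"] d_def by (simp add: algebra_simps)
  ultimately have rd: "r \<le> sup d 0" by metis
  have dis: "inf r (sup (-d) 0) = 0"
  proof -
    have "inf r (sup (-d) 0) \<le> inf (sup d 0) (sup (-d) 0)" using rd by (meson inf_mono order_refl)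
    then have "inf r (sup (-d) 0) \<le> 0" using pos_neg_disj[of d] by simp
    moreover have "0 \<le> inf r (sup (-d) 0)" using r by simp
    ultimately show ?thesis by simp
  qed
  have "real m *\<^sub>R r = a - sup d 0 + sup (-d) 0"
    using pos_part_eq[of d] unfolding d_def by (simp add: algebra_simps)
  then have "real m *\<^sub>R r + r \<le> a + sup (-d) 0"
  proof -
    assume eq: "real m *\<^sub>R r = a - sup d 0 + sup (-d) 0"
    have "real m *\<^sub>R r + r \<le> real m *\<^sub>R r + sup d 0" using rd by (rule add_left_mono)
    also have "\<dots> = a + sup (-d) 0" using eq by (simp add: algebra_simps)
    finally show ?thesis .
  qed
  then have le1: "real (Suc m) *\<^sub>R r \<le> a + sup (-d) 0" by (simp add: algebra_simps)
  have "inf (real (Suc m) *\<^sub>R r) (sup (-d) 0) = 0"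
    using disj_mult[of "sup (-d) 0" r "Suc m"] dis r by (simp add: inf.commute)
  then have "real (Suc m) *\<^sub>R r \<le> a"
    using disj_le[OF _ a _ le1] r by (simp add: scaleR_nonneg_nonneg)
  moreover have "real m *\<^sub>R r \<le> real (Suc m) *\<^sub>R r" using r by (simp add: scaleR_right_mono)
  ultimately show "real m *\<^sub>R r \<le> a" by simp
qed

lemma transl_cont:
  assumes lin: "linear_topology (\<tau>::'a::{ordered_real_vector,lattice} topology)"
  shows "continuous_map \<tau> \<tau> (\<lambda>x. x + c)"
proof -
  have top: "topspace \<tau> = UNIV" using lin unfolding linear_topology_def by simp
  have add: "continuous_map (prod_topology \<tau> \<tau>) \<tau> (\<lambda>(x, y). x + y)"
    using lin unfolding linear_topology_def by simp
  have "continuous_map \<tau> (prod_topology \<tau> \<tau>) (\<lambda>x. (x, c))"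
    by (intro continuous_map_pairedI) (auto simp: top continuous_map_id[unfolded id_def])
  from continuous_map_compose[OF this add] show ?thesis by (simp add: o_def)
qed

lemma transl_open:
  assumes lin: "linear_topology (\<tau>::'a::{ordered_real_vector,lattice} topology)"
    and U: "openin \<tau> U"
  shows "openin \<tau> {x. x + c \<in> U}"
proof -
  have top: "topspace \<tau> = UNIV" using lin unfolding linear_topology_def by simp
  from openin_continuous_map_preimage[OF transl_cont[OF lin] U] show ?thesis by (simp add: top)
qed

lemma nbhd0_half:
  assumes lin: "linear_topology (\<tau>::'a::{ordered_real_vector,lattice} topology)"
    and ls: "locally_solid \<tau>" and U: "nbhd0 \<tau> U"
  shows "\<exists>W. nbhd0 \<tau> W \<and> solid W \<and> set_plus_vl W W \<subseteq> U"
proof -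
  have top: "topspace \<tau> = UNIV" using lin unfolding linear_topology_def by simp
  have add: "continuous_map (prod_topology \<tau> \<tau>) \<tau> (\<lambda>(x, y). x + y)"
    using lin unfolding linear_topology_def by simp
  obtain Ob where Ob: "openin \<tau> Ob" "0 \<in> Ob" "Ob \<subseteq> U" using U unfolding nbhd0_def by blast
  let ?S = "{p \<in> topspace (prod_topology \<tau> \<tau>). (\<lambda>(x, y). x + y) p \<in> Ob}"
  have S: "openin (prod_topology \<tau> \<tau>) ?S"
    by (rule openin_continuous_map_preimage[OF add Ob(1)])
  have tp: "topspace (prod_topology \<tau> \<tau>) = UNIV" using top by simp
  have "(case (0::'a, 0::'a) of (x, y) \<Rightarrow> x + y) \<in> Ob" using Ob(2) by (simp only: case_prod_conv add_0_left)
  then have z: "(0, 0) \<in> ?S" unfolding tp by blast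
  have ex: "\<exists>U V. openin \<tau> U \<and> openin \<tau> V \<and> 0 \<in> U \<and> 0 \<in> V \<and> U \<times> V \<subseteq> ?S"
    by (rule iffD1[OF openin_prod_topology_alt S, rule_format, OF z])
  then obtain U1 U2 where U12: "openin \<tau> U1" "openin \<tau> U2" "0 \<in> U1" "0 \<in> U2" "U1 \<times> U2 \<subseteq> ?S"
    by blast
  have "nbhd0 \<tau> (U1 \<inter> U2)" unfolding nbhd0_def
    using U12 by (intro exI[of _ "U1 \<inter> U2"]) auto
  then obtain V where V: "nbhd0 \<tau> V" "solid V" "V \<subseteq> U1 \<inter> U2"
    using ls unfolding locally_solid_def by blast
  have "set_plus_vl V V \<subseteq> U"
  proof
    fix z assume "z \<in> set_plus_vl V V"
    then obtain a b where ab: "z = a + b" "a \<in> V" "b \<in> V" unfolding set_plus_vl_def by blast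
    then have "(a, b) \<in> ?S" using V(3) U12(5) by blast
    then show "z \<in> U" using ab Ob(3) by auto
  qed
  then show ?thesis using V by blast
qed

lemma normal_exists:
  assumes lin: "linear_topology (\<tau>::'a::{ordered_real_vector,lattice} topology)"
    and ls: "locally_solid \<tau>" and U: "nbhd0 \<tau> U"
  shows "\<exists>V. normal_solid_seq \<tau> V \<and> V 0 \<subseteq> U"
proof -
  obtain V0 where V0: "nbhd0 \<tau> V0" "solid V0" "V0 \<subseteq> U"
    using ls U unfolding locally_solid_def by blast
  define h where "h = (\<lambda>W. SOME W'. nbhd0 \<tau> W' \<and> solid W' \<and> set_plus_vl W' W' \<subseteq> W)"
  have hW: "nbhd0 \<tau> (h W) \<and> solid (h W) \<and> set_plus_vl (h W) (h W) \<subseteq> W" if "nbhd0 \<tau> W" for W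
    unfolding h_def by (rule someI_ex) (rule nbhd0_half[OF lin ls that])
  define V where "V = rec_nat V0 (\<lambda>n W. h W)"
  have V0': "V 0 = V0" and VS: "\<And>n. V (Suc n) = h (V n)" unfolding V_def by simp_all
  have inv: "nbhd0 \<tau> (V n) \<and> solid (V n)" for n
  proof (induction n)
    case 0 then show ?case using V0 V0' by simp
  next
    case (Suc n) then show ?case using hW[of "V n"] VS[of n] by simp
  qed
  have "normal_solid_seq \<tau> V" unfolding normal_solid_seq_def
    using inv hW VS by simp
  then show ?thesis using V0 V0' by auto
qed

lemma solid_mem: "solid S \<Longrightarrow> y \<in> S \<Longrightarrow> vabs x \<le> vabs y \<Longrightarrow> x \<in> S"
  unfolding solid_def by blast

lemma solid_minus: "solid S \<Longrightarrow> y \<in> S \<Longrightarrow> - y \<in> S"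
  by (rule solid_mem[of S y]) simp_all

lemma solid_vabs: "solid S \<Longrightarrow> y \<in> S \<Longrightarrow> vabs y \<in> S"
  by (rule solid_mem[of S y]) simp_all

lemma solid_vabs_iff: "solid S \<Longrightarrow> vabs y \<in> S \<longleftrightarrow> y \<in> S"
  using solid_mem[of S "vabs y" y] solid_vabs[of S y] by auto

lemma nbhd0_zero: "nbhd0 \<tau> U \<Longrightarrow> 0 \<in> U"
  unfolding nbhd0_def by blast

lemma nbhd0_Int: "nbhd0 \<tau> U \<Longrightarrow> nbhd0 \<tau> V \<Longrightarrow> nbhd0 \<tau> (U \<inter> V)"
  unfolding nbhd0_def by (meson Int_mono openin_Int IntI)

lemma solid_Int: "solid U \<Longrightarrow> solid V \<Longrightarrow> solid (U \<inter> V)"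
  unfolding solid_def by blast

lemma solid_UNIV: "solid UNIV"
  unfolding solid_def by blast

lemma nbhd0_UNIV:
  "linear_topology (\<tau>::'a::{ordered_real_vector,lattice} topology) \<Longrightarrow> nbhd0 \<tau> UNIV"
  unfolding nbhd0_def linear_topology_def by (metis openin_topspace UNIV_I subset_UNIV)

lemma normal_zero: "normal_solid_seq \<tau> V \<Longrightarrow> 0 \<in> V n"
  unfolding normal_solid_seq_def using nbhd0_zero by blast

lemma normal_add: "normal_solid_seq \<tau> V \<Longrightarrow> x \<in> V (Suc n) \<Longrightarrow> y \<in> V (Suc n) \<Longrightarrow> x + y \<in> V n"
  unfolding normal_solid_seq_def set_plus_vl_def by blast

lemma normal_solid: "normal_solid_seq \<tau> V \<Longrightarrow> solid (V n)"
  unfolding normal_solid_seq_def by blast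

lemma normal_nbhd: "normal_solid_seq \<tau> V \<Longrightarrow> nbhd0 \<tau> (V n)"
  unfolding normal_solid_seq_def by blast

lemma normal_Suc: "normal_solid_seq \<tau> V \<Longrightarrow> V (Suc n) \<subseteq> V n"
proof
  fix x assume V: "normal_solid_seq \<tau> V" and x: "x \<in> V (Suc n)"
  have "x + 0 \<in> V n" by (rule normal_add[OF V x normal_zero[OF V]])
  then show "x \<in> V n" by simp
qed

lemma normal_mono: "normal_solid_seq \<tau> V \<Longrightarrow> n \<le> m \<Longrightarrow> V m \<subseteq> V n"
proof (induction m)
  case 0 then show ?case by simp
next
  case (Suc m)
  then show ?case
    by (metis le_Suc_eq normal_Suc order_refl subset_trans)
qed

lemma normal_Int:
  "normal_solid_seq \<tau> V \<Longrightarrow> normal_solid_seq \<tau> W \<Longrightarrow> normal_solid_seq \<tau> (\<lambda>n. V n \<inter> W n)"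
proof -
  assume V: "normal_solid_seq \<tau> V" and W: "normal_solid_seq \<tau> W"
  have sp: "set_plus_vl (A \<inter> B) (A \<inter> B) \<subseteq> set_plus_vl A A \<inter> set_plus_vl B B" for A B :: "'a set"
    unfolding set_plus_vl_def by blast
  show ?thesis unfolding normal_solid_seq_def
  proof (intro allI conjI)
    fix n
    show "nbhd0 \<tau> (V n \<inter> W n)" using V W by (intro nbhd0_Int) (simp_all add: normal_nbhd)
    show "solid (V n \<inter> W n)" using V W by (intro solid_Int) (simp_all add: normal_solid)
    show "set_plus_vl (V (Suc n) \<inter> W (Suc n)) (V (Suc n) \<inter> W (Suc n)) \<subseteq> V n \<inter> W n"
      using sp[of "V (Suc n)" "W (Suc n)"] V W unfolding normal_solid_seq_def by blast
  qed
qed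

lemma tendsto_nbhd:
  assumes lin: "linear_topology (\<tau>::'a::{ordered_real_vector,lattice} topology)"
    and t: "net_tendsto \<tau> D le x l" and U: "nbhd0 \<tau> U"
  shows "net_eventually D le (\<lambda>a. x a - l \<in> U)"
proof -
  obtain Ob where Ob: "openin \<tau> Ob" "0 \<in> Ob" "Ob \<subseteq> U" using U unfolding nbhd0_def by blast
  have "openin \<tau> {y. y + (- l) \<in> Ob}" by (rule transl_open[OF lin Ob(1)])
  moreover have "l \<in> {y. y + (- l) \<in> Ob}" using Ob(2) by simp
  ultimately have "net_eventually D le (\<lambda>a. x a \<in> {y. y + (- l) \<in> Ob})"
    using t unfolding net_tendsto_def by blast
  then show ?thesis unfolding net_eventually_def using Ob(3) by auto
qed

lemma tendsto_closed:
  assumes lin: "linear_topology (\<tau>::'a::{ordered_real_vector,lattice} topology)"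
    and D: "directed D le" and t: "net_tendsto \<tau> D le x w"
    and V1: "nbhd0 \<tau> V1" "solid V1" "set_plus_vl V1 V1 \<subseteq> V0"
    and xin: "\<And>a. a \<in> D \<Longrightarrow> x a \<in> V1"
  shows "w \<in> V0"
proof -
  obtain a0 where a0: "a0 \<in> D" "\<And>a. a \<in> D \<Longrightarrow> le a0 a \<Longrightarrow> x a - w \<in> V1"
    using tendsto_nbhd[OF lin t V1(1)] unfolding net_eventually_def by blast
  have "le a0 a0" using D a0(1) unfolding directed_def by blast
  then have "x a0 - w \<in> V1" using a0 by blast
  then have "- (x a0 - w) \<in> V1" using solid_minus V1(2) by blast
  moreover have "x a0 \<in> V1" using xin a0(1) by blast
  ultimately have "x a0 + (- (x a0 - w)) \<in> set_plus_vl V1 V1" unfolding set_plus_vl_def by blast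
  then show ?thesis using V1(3) by auto
qed

lemma eventually_transfer:
  assumes "inj g"
  shows "net_eventually (g ` D) (\<lambda>a b. le (inv g a) (inv g b)) (\<lambda>a. P (inv g a))
     \<longleftrightarrow> net_eventually D le P"
  unfolding net_eventually_def using assms by (auto simp: inv_f_f)

lemma transfer_olb:
  fixes \<tau> :: "'a::{ordered_real_vector,lattice} topology" and g :: "'j \<Rightarrow> 'i" and D :: "'j set"
  assumes g: "inj g" and olb: "o_lebesgue TYPE('i) \<tau>"
    and D: "directed D le" and oc: "order_conv D le x l"
  shows "net_tendsto \<tau> D le x l"
proof -
  define D' where "D' = g ` D"
  define le' where "le' = (\<lambda>a b. le (inv g a) (inv g b))"
  define x' where "x' = (\<lambda>a. x (inv g a))"
  have ev: "net_eventually D' le' (\<lambda>a. P (inv g a)) \<longleftrightarrow> net_eventually D le P" for P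
    unfolding D'_def le'_def by (rule eventually_transfer[OF g])
  have Dd: "D \<noteq> {}" "\<forall>a\<in>D. le a a" "\<forall>a\<in>D. \<forall>b\<in>D. \<forall>c\<in>D. le a b \<and> le b c \<longrightarrow> le a c"
      "\<forall>a\<in>D. \<forall>b\<in>D. \<exists>c\<in>D. le a c \<and> le b c"
    using D unfolding directed_def by blast+
  have im: "inv g a \<in> D" if "a \<in> g ` D" for a
    using that g by (metis imageE inv_f_f)
  have "directed D' le'" unfolding directed_def D'_def le'_def
  proof (intro conjI ballI impI)
    show "g ` D \<noteq> {}" using Dd(1) by blast
  next
    fix a assume "a \<in> g ` D" then show "le (inv g a) (inv g a)" using Dd(2) im by blast
  next
    fix a b c assume "a \<in> g ` D" "b \<in> g ` D" "c \<in> g ` D"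
      "le (inv g a) (inv g b) \<and> le (inv g b) (inv g c)"
    then show "le (inv g a) (inv g c)" using Dd(3) im by blast
  next
    fix a b assume ab: "a \<in> g ` D" "b \<in> g ` D"
    then obtain c where c: "c \<in> D" "le (inv g a) c" "le (inv g b) c" using Dd(4) im by blast
    have "inv g (g c) = c" using g by (rule inv_f_f)
    then show "\<exists>c\<in>g ` D. le (inv g a) (inv g c) \<and> le (inv g b) (inv g c)"
      using c by (intro bexI[of _ "g c"]) auto
  qed
  moreover have "order_conv D' le' x' l"
  proof -
    obtain B leB y where B: "directed (B::'a set) leB"
      "\<forall>b1\<in>B. \<forall>b2\<in>B. leB b1 b2 \<longrightarrow> y b2 \<le> y b1" "is_inf_of (y ` B) 0"
      "\<forall>b\<in>B. net_eventually D le (\<lambda>a. vabs (x a - l) \<le> y b)"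
      using oc unfolding order_conv_def by blast
    have "\<forall>b\<in>B. net_eventually D' le' (\<lambda>a. vabs (x' a - l) \<le> y b)"
    proof
      fix b assume "b \<in> B"
      then show "net_eventually D' le' (\<lambda>a. vabs (x' a - l) \<le> y b)"
        using ev[of "\<lambda>a. vabs (x a - l) \<le> y b"] B(4) unfolding x'_def by simp
    qed
    then show ?thesis unfolding order_conv_def using B(1-3) by blast
  qed
  ultimately have t: "net_tendsto \<tau> D' le' x' l"
    using olb unfolding o_lebesgue_def D'_def by blast
  show ?thesis unfolding net_tendsto_def
  proof (intro allI impI)
    fix U assume "openin \<tau> U \<and> l \<in> U"
    then have "net_eventually D' le' (\<lambda>a. x' a \<in> U)" using t unfolding net_tendsto_def by blast
    then show "net_eventually D le (\<lambda>a. x a \<in> U)" using ev[of "\<lambda>a. x a \<in> U"] unfolding x'_def by simp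
  qed
qed

lemma hausdorff_sep:
  assumes lin: "linear_topology (\<tau>::'a::{ordered_real_vector,lattice} topology)" and w: "w \<noteq> 0"
  shows "\<exists>U. nbhd0 \<tau> U \<and> w \<notin> U"
proof -
  have "Hausdorff_space \<tau>" "topspace \<tau> = UNIV" using lin unfolding linear_topology_def by auto
  then obtain U V where "openin \<tau> U" "openin \<tau> V" "0 \<in> U" "w \<in> V" "disjnt U V"
    using w unfolding Hausdorff_space_def by (metis UNIV_I)
  then show ?thesis unfolding nbhd0_def disjnt_def by blast
qed

definition ideal_vl :: "'a::{ordered_real_vector,lattice} set \<Rightarrow> bool" where
  "ideal_vl I \<longleftrightarrow> solid I \<and> (\<forall>x\<in>I. \<forall>y\<in>I. x + y \<in> I)"

lemma dc_mono: "A \<subseteq> B \<Longrightarrow> disj_compl B \<subseteq> disj_compl A"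
  unfolding disj_compl_def by blast

lemma dc_solid: "solid (disj_compl N)"
  unfolding solid_def disj_compl_def
proof (intro allI impI CollectI ballI, elim conjE)
  fix x y z assume y: "y \<in> {x. \<forall>y\<in>N. inf (vabs x) (vabs y) = 0}" and xy: "vabs x \<le> vabs y" and z: "z \<in> N"
  have "inf (vabs x) (vabs z) \<le> inf (vabs y) (vabs z)" using xy by (rule inf_mono) simp
  also have "\<dots> = 0" using y z by blast
  finally show "inf (vabs x) (vabs z) = 0" using vabs_nonneg[of x] vabs_nonneg[of z]
    by (meson le_inf_iff order.antisym)
qed

lemma dc_add:
  assumes x: "x \<in> disj_compl N" and y: "y \<in> disj_compl N"
  shows "x + y \<in> disj_compl N"
  unfolding disj_compl_def
proof (intro CollectI ballI)
  fix z assume z: "z \<in> N"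
  have "inf (vabs (x + y)) (vabs z) \<le> inf (vabs x + vabs y) (vabs z)"
    by (rule inf_mono[OF vabs_add order_refl])
  also have "\<dots> = inf (vabs z) (vabs x + vabs y)" by (simp add: inf.commute)
  also have "\<dots> \<le> inf (vabs z) (vabs x) + inf (vabs z) (vabs y)"
    by (rule riesz) (simp_all add: vabs_nonneg)
  also have "\<dots> = 0"
  proof -
    have "inf (vabs x) (vabs z) = 0" "inf (vabs y) (vabs z) = 0" using x y z unfolding disj_compl_def by blast+
    then show ?thesis by (simp add: inf.commute)
  qed
  finally have "inf (vabs (x + y)) (vabs z) \<le> 0" .
  moreover have "0 \<le> inf (vabs (x + y)) (vabs z)" by (simp add: vabs_nonneg)
  ultimately show "inf (vabs (x + y)) (vabs z) = 0" by (rule order.antisym)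
qed

lemma dc_ideal: "ideal_vl (disj_compl N)"
  unfolding ideal_vl_def using dc_solid dc_add by blast

lemma solid_INT: "(\<And>i. i \<in> I \<Longrightarrow> solid (V i)) \<Longrightarrow> solid (\<Inter>i\<in>I. V i)"
  unfolding solid_def by blast

lemma normal_N_ideal: "normal_solid_seq \<tau> V \<Longrightarrow> ideal_vl (\<Inter>n. V n)"
  unfolding ideal_vl_def
proof (intro conjI ballI)
  assume V: "normal_solid_seq \<tau> V"
  show "solid (\<Inter>n. V n)" by (rule solid_INT) (rule normal_solid[OF V])
  fix x y assume "x \<in> (\<Inter>n. V n)" "y \<in> (\<Inter>n. V n)"
  then show "x + y \<in> (\<Inter>n. V n)" using normal_add[OF V] by blast
qed

lemma ideal_zero: "ideal_vl I \<Longrightarrow> t \<in> I \<Longrightarrow> 0 \<in> I"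
  unfolding ideal_vl_def by (metis solid_mem vabs_nonneg vabs_zero_iff)

lemma ideal_mult: "ideal_vl I \<Longrightarrow> t \<in> I \<Longrightarrow> real k *\<^sub>R t \<in> I"
proof (induction k)
  case 0 then show ?case using ideal_zero by simp
next
  case (Suc k)
  have "real (Suc k) *\<^sub>R t = t + real k *\<^sub>R t" by (simp add: algebra_simps)
  then show ?case using Suc unfolding ideal_vl_def by metis
qed

lemma lemmaL:
  fixes I :: "'a::{ordered_real_vector,lattice} set"
  assumes arch: "archimedean_vl TYPE('a)" and I: "ideal_vl I" and w: "0 \<le> w"
    and ub: "\<And>a. a \<in> I \<Longrightarrow> 0 \<le> a \<Longrightarrow> a \<le> w \<Longrightarrow> a \<le> u"
    and t: "t \<in> I" "0 \<le> t" "t \<le> w - inf w u"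
  shows "t = 0"
proof -
  have "0 \<in> I" using ideal_zero[OF I t(1)] .
  then have u0: "0 \<le> u" using ub w by blast
  have sI: "solid I" using I unfolding ideal_vl_def by blast
  have main: "real k *\<^sub>R t \<le> inf w u" for k
  proof (induction k)
    case 0 then show ?case using w u0 by simp
  next
    case (Suc k)
    have eq: "real (Suc k) *\<^sub>R t = t + real k *\<^sub>R t" by (simp add: algebra_simps)
    have "t + real k *\<^sub>R t \<le> (w - inf w u) + inf w u" using t(3) Suc by (rule add_mono)
    then have le: "real (Suc k) *\<^sub>R t \<le> w" unfolding eq by simp
    have pos: "0 \<le> real (Suc k) *\<^sub>R t" using t(2) by (simp add: scaleR_nonneg_nonneg)
    have "real (Suc k) *\<^sub>R t \<in> I" by (rule ideal_mult[OF I t(1)])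
    then have "real (Suc k) *\<^sub>R t \<le> u" using ub pos le by blast
    then show ?case using le by simp
  qed
  show ?thesis
  proof (rule arch_zero[OF arch t(2)])
    fix n show "real n *\<^sub>R t \<le> w" using main[of n] by (meson le_inf_iff)
  qed
qed

lemma carrier_mem:
  "x \<in> carrier_top \<tau> \<longleftrightarrow> (\<exists>V. normal_solid_seq \<tau> V \<and> x \<in> disj_compl (\<Inter>n. V n))"
  unfolding carrier_top_def by blast

lemma carrier_ideal: "ideal_vl (carrier_top \<tau>)"
  unfolding ideal_vl_def
proof (intro conjI ballI)
  show "solid (carrier_top \<tau>)" unfolding solid_def
  proof (intro allI impI, elim conjE)
    fix x y assume "y \<in> carrier_top \<tau>" "vabs x \<le> vabs y"
    then show "x \<in> carrier_top \<tau>" unfolding carrier_mem using dc_solid solid_mem by metis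
  qed
  fix x y assume "x \<in> carrier_top \<tau>" "y \<in> carrier_top \<tau>"
  then obtain V W where V: "normal_solid_seq \<tau> V" "x \<in> disj_compl (\<Inter>n. V n)"
    and W: "normal_solid_seq \<tau> W" "y \<in> disj_compl (\<Inter>n. W n)" unfolding carrier_mem by blast
  have VW: "normal_solid_seq \<tau> (\<lambda>n. V n \<inter> W n)" by (rule normal_Int[OF V(1) W(1)])
  have "(\<Inter>n. V n \<inter> W n) \<subseteq> (\<Inter>n. V n)" "(\<Inter>n. V n \<inter> W n) \<subseteq> (\<Inter>n. W n)" by blast+
  then have "x \<in> disj_compl (\<Inter>n. V n \<inter> W n)" "y \<in> disj_compl (\<Inter>n. V n \<inter> W n)"
    using V(2) W(2) dc_mono by blast+
  then have "x + y \<in> disj_compl (\<Inter>n. V n \<inter> W n)" by (rule dc_add)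
  then show "x + y \<in> carrier_top \<tau>" unfolding carrier_mem using VW by blast
qed

lemma density:
  fixes \<tau> :: "'a::{ordered_real_vector,lattice} topology" and f :: "'a set \<Rightarrow> 'i"
  assumes arch: "archimedean_vl TYPE('a)" and lin: "linear_topology \<tau>"
    and ls: "locally_solid \<tau>" and olb: "o_lebesgue TYPE('i) \<tau>" and f: "inj f"
    and w: "0 \<le> w" "w \<noteq> 0"
  shows "\<exists>v. v \<in> carrier_top \<tau> \<and> 0 \<le> v \<and> v \<le> w \<and> v \<noteq> 0"
proof (rule ccontr)
  assume H0: "\<not> ?thesis"
  obtain U where U: "nbhd0 \<tau> U" "w \<notin> U" using hausdorff_sep[OF lin w(2)] by blast
  obtain V where V: "normal_solid_seq \<tau> V" "V 0 \<subseteq> U" using normal_exists[OF lin ls U(1)] by blast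
  define N where "N = (\<Inter>n. V n)"
  have NI: "ideal_vl N" unfolding N_def by (rule normal_N_ideal[OF V(1)])
  have Ns: "solid N" using NI unfolding ideal_vl_def by blast
  have H: "v = 0" if "v \<in> disj_compl N" "0 \<le> v" "v \<le> w" for v
    using H0 that V(1) unfolding carrier_mem N_def by blast
  define A where "A = {a \<in> N. 0 \<le> a \<and> a \<le> w}"
  have N0: "0 \<in> N" unfolding N_def using normal_zero[OF V(1)] by blast
  then have A0: "0 \<in> A" unfolding A_def using w by simp
  have supA: "w \<le> u" if ub: "\<And>a. a \<in> A \<Longrightarrow> a \<le> u" for u
  proof -
    have u0: "0 \<le> u" using ub A0 by blast
    define z where "z = w - inf w u"
    have z0: "0 \<le> z" unfolding z_def by simp
    have zw: "z \<le> w" unfolding z_def using w u0 by simp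
    have "z \<in> disj_compl N" unfolding disj_compl_def
    proof (intro CollectI ballI)
      fix y assume y: "y \<in> N"
      define t where "t = inf z (vabs y)"
      have t0: "0 \<le> t" unfolding t_def using z0 vabs_nonneg by simp
      have "vabs t \<le> vabs (vabs y)"
      proof -
        have "vabs t = t" by (rule vabs_pos[OF t0])
        moreover have "t \<le> vabs y" unfolding t_def by simp
        ultimately show ?thesis by simp
      qed
      then have tN: "t \<in> N" using solid_mem[OF Ns solid_vabs[OF Ns y]] by blast
      have tz: "t \<le> z" unfolding t_def by simp
      have "t = 0"
        by (rule lemmaL[OF arch NI w(1), of u]) (use ub tN t0 tz z_def A_def in auto)
      then show "inf (vabs z) (vabs y) = 0" using vabs_pos[OF z0] t_def by simp
    qed
    then have "z = 0" using H z0 zw by blast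
    then have "w = inf w u" unfolding z_def by simp
    then show "w \<le> u" by (metis inf.bounded_iff order_refl)
  qed
  have sup_mem: "sup a b \<in> A" if "a \<in> A" "b \<in> A" for a b
  proof -
    have a: "a \<in> N" "0 \<le> a" "a \<le> w" and b: "b \<in> N" "0 \<le> b" "b \<le> w" using that unfolding A_def by auto
    have ab: "a + b \<in> N" using NI a b unfolding ideal_vl_def by blast
    have s0: "0 \<le> sup a b" using a(2) by (simp add: le_supI1)
    have "sup a b \<le> a + b" using a(2) b(2)
      by (metis add_increasing add_increasing2 order_refl sup.bounded_iff)
    moreover have "a + b = vabs (a + b)" using a(2) b(2) by (simp add: vabs_pos)
    ultimately have "vabs (sup a b) \<le> vabs (a + b)" using vabs_pos[OF s0] by simp
    then have "sup a b \<in> N" using solid_mem[OF Ns ab] by blast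
    then show ?thesis unfolding A_def using s0 a(3) b(3) by simp
  qed
  have dirA: "directed A (\<le>)" unfolding directed_def
  proof (intro conjI ballI impI)
    show "A \<noteq> {}" using A0 by blast
  next
    fix a b c :: 'a assume "a \<le> b \<and> b \<le> c" then show "a \<le> c" by (meson order_trans)
  next
    fix a b assume "a \<in> A" "b \<in> A"
    then show "\<exists>c\<in>A. a \<le> c \<and> b \<le> c" using sup_mem by (intro bexI[of _ "sup a b"]) auto
  qed simp
  have oc: "order_conv A (\<le>) (\<lambda>a. a) w" unfolding order_conv_def
  proof (intro exI conjI)
    let ?B = "(\<lambda>a. w - a) ` A"
    show "directed ?B (\<lambda>b1 b2. b2 \<le> b1)" unfolding directed_def
    proof (intro conjI ballI impI)
      show "?B \<noteq> {}" using A0 by blast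
    next
      fix a b c :: 'a assume "b \<le> a \<and> c \<le> b" then show "c \<le> a" by (meson order_trans)
    next
      fix b1 b2 assume "b1 \<in> ?B" "b2 \<in> ?B"
      then obtain a1 a2 where a: "a1 \<in> A" "a2 \<in> A" "b1 = w - a1" "b2 = w - a2" by blast
      have "w - sup a1 a2 \<in> ?B" using sup_mem[OF a(1,2)] by blast
      moreover have "w - sup a1 a2 \<le> b1" "w - sup a1 a2 \<le> b2" using a(3,4) by simp_all
      ultimately show "\<exists>c\<in>?B. c \<le> b1 \<and> c \<le> b2" by blast
    qed simp
    show "\<forall>b1\<in>?B. \<forall>b2\<in>?B. b2 \<le> b1 \<longrightarrow> id b2 \<le> id b1" by simp
    show "is_inf_of (id ` ?B) 0" unfolding is_inf_of_def
    proof (intro conjI allI impI ballI)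
      fix s assume "s \<in> id ` ?B" then show "0 \<le> s" unfolding A_def by auto
    next
      fix m' assume lb: "\<forall>s\<in>id ` ?B. m' \<le> s"
      have "a \<le> w - m'" if "a \<in> A" for a
      proof -
        have "m' \<le> w - a" using lb that by auto
        then show ?thesis by (simp add: algebra_simps)
      qed
      then have "w \<le> w - m'" using supA by blast
      then show "m' \<le> 0" by simp
    qed
    show "\<forall>b\<in>?B. net_eventually A (\<le>) (\<lambda>a. vabs (a - w) \<le> id b)"
    proof
      fix b assume "b \<in> ?B"
      then obtain a0 where a0: "a0 \<in> A" "b = w - a0" by blast
      have "vabs (a - w) \<le> id b" if "a \<in> A" "a0 \<le> a" for a
      proof -
        have "0 \<le> w - a" using that unfolding A_def by simp
        then have "vabs (w - a) = w - a" by (rule vabs_pos)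
        moreover have "vabs (a - w) = vabs (w - a)" using vabs_minus[of "w - a"] by simp
        ultimately have "vabs (a - w) = w - a" by simp
        then show ?thesis using a0 that by simp
      qed
      then show "net_eventually A (\<le>) (\<lambda>a. vabs (a - w) \<le> id b)"
        unfolding net_eventually_def using a0 by blast
    qed
  qed
  have g: "inj (\<lambda>a::'a. f {a})" using f unfolding inj_def by (metis singleton_inject)
  have t: "net_tendsto \<tau> A (\<le>) (\<lambda>a. a) w" by (rule transfer_olb[OF g olb dirA oc])
  have V1: "nbhd0 \<tau> (V 1)" "solid (V 1)" "set_plus_vl (V 1) (V 1) \<subseteq> V 0"
    using V(1) unfolding normal_solid_seq_def by simp_all
  have "w \<in> V 0"
    by (rule tendsto_closed[OF lin dirA t V1]) (use A_def N_def in blast)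
  then show False using V(2) U(2) by blast
qed

lemma normal_UNIV:
  "linear_topology (\<tau>::'a::{ordered_real_vector,lattice} topology) \<Longrightarrow> normal_solid_seq \<tau> (\<lambda>n. UNIV)"
  unfolding normal_solid_seq_def using nbhd0_UNIV solid_UNIV by blast

lemma zero_in_dc: "(0::'a::{ordered_real_vector,lattice}) \<in> disj_compl N"
proof -
  have "vabs (0::'a) = 0" by (simp add: vabs_zero_iff)
  then have "inf (vabs (0::'a)) (vabs y) = 0" for y using vabs_nonneg[of y] by (simp add: inf.absorb1)
  then show ?thesis unfolding disj_compl_def by blast
qed

lemma diag_normal:
  fixes \<tau> :: "'a::{ordered_real_vector,lattice} topology" and Vs :: "nat \<Rightarrow> nat \<Rightarrow> 'a set"
  assumes lin: "linear_topology \<tau>" and Vs: "\<And>k. normal_solid_seq \<tau> (Vs k)"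
  shows "\<exists>W. normal_solid_seq \<tau> W \<and> (\<forall>k. (\<Inter>n. W n) \<subseteq> (\<Inter>n. Vs k n))"
proof -
  define W where "W = (\<lambda>n. \<Inter>k\<in>{..<n}. Vs k n)"
  have nb: "nbhd0 \<tau> (\<Inter>k\<in>{..<m}. Vs k n)" for m n
  proof (induction m)
    case 0 then show ?case using nbhd0_UNIV[OF lin] by simp
  next
    case (Suc m)
    have "(\<Inter>k\<in>{..<Suc m}. Vs k n) = (\<Inter>k\<in>{..<m}. Vs k n) \<inter> Vs m n"
      by (auto simp: lessThan_Suc)
    then show ?case using Suc nbhd0_Int normal_nbhd[OF Vs] by metis
  qed
  have "normal_solid_seq \<tau> W" unfolding normal_solid_seq_def
  proof (intro allI conjI)
    fix n
    show "nbhd0 \<tau> (W n)" unfolding W_def by (rule nb)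
    show "solid (W n)" unfolding W_def by (rule solid_INT) (rule normal_solid[OF Vs])
    show "set_plus_vl (W (Suc n)) (W (Suc n)) \<subseteq> W n"
    proof
      fix z assume "z \<in> set_plus_vl (W (Suc n)) (W (Suc n))"
      then obtain a b where ab: "z = a + b" "a \<in> W (Suc n)" "b \<in> W (Suc n)"
        unfolding set_plus_vl_def by blast
      have "a + b \<in> Vs k n" if "k < n" for k
      proof -
        have "a \<in> Vs k (Suc n)" "b \<in> Vs k (Suc n)" using ab that unfolding W_def by auto
        then show ?thesis by (rule normal_add[OF Vs])
      qed
      then show "z \<in> W n" unfolding W_def ab(1) by blast
    qed
  qed
  moreover have "(\<Inter>n. W n) \<subseteq> (\<Inter>n. Vs k n)" for k
  proof
    fix y assume y: "y \<in> (\<Inter>n. W n)"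
    have "y \<in> Vs k i" for i
    proof -
      have "y \<in> W (Suc (max i k))" using y by blast
      then have "y \<in> Vs k (Suc (max i k))" unfolding W_def by auto
      moreover have "Vs k (Suc (max i k)) \<subseteq> Vs k i" by (rule normal_mono[OF Vs]) simp
      ultimately show ?thesis by blast
    qed
    then show "y \<in> (\<Inter>n. Vs k n)" by blast
  qed
  ultimately show ?thesis by blast
qed

lemma csp_carrier:
  fixes \<tau> :: "'a::{ordered_real_vector,lattice} topology" and f :: "'a set \<Rightarrow> 'i"
  assumes arch: "archimedean_vl TYPE('a)" and lin: "linear_topology \<tau>"
    and ls: "locally_solid \<tau>" and olb: "o_lebesgue TYPE('i) \<tau>" and f: "inj f"
    and csp: "countable_sup_property TYPE('a)"
  shows "carrier_top \<tau> = UNIV"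
proof (intro set_eqI iffI)
  fix x0 :: 'a
  show "x0 \<in> carrier_top \<tau>"
  proof -
    define x where "x = vabs x0"
    have x0': "0 \<le> x" unfolding x_def by (rule vabs_nonneg)
    define Ds where "Ds = {c \<in> carrier_top \<tau>. 0 \<le> c \<and> c \<le> x}"
    have supD: "is_sup_of Ds x" unfolding is_sup_of_def
    proof (intro conjI allI impI ballI)
      fix s assume "s \<in> Ds" then show "s \<le> x" unfolding Ds_def by simp
    next
      fix u assume ub: "\<forall>s\<in>Ds. s \<le> u"
      define z where "z = x - inf x u"
      have z0: "0 \<le> z" unfolding z_def by simp
      have "z = 0"
      proof (rule ccontr)
        assume "z \<noteq> 0"
        then obtain v where v: "v \<in> carrier_top \<tau>" "0 \<le> v" "v \<le> z" "v \<noteq> 0"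
          using density[OF arch lin ls olb f z0] by blast
        have "v = 0"
          by (rule lemmaL[OF arch carrier_ideal[of \<tau>] x0', where u=u]) (use ub v z_def Ds_def in auto)
        then show False using v(4) by simp
      qed
      then have "x = inf x u" unfolding z_def by simp
      then show "x \<le> u" by (metis inf.bounded_iff order_refl)
    qed
    obtain T where T: "T \<subseteq> Ds" "countable T" "is_sup_of T x"
      using csp supD unfolding countable_sup_property_def by blast
    show ?thesis
    proof (cases "T = {}")
      case True
      then have "x \<le> 0" using T(3) unfolding is_sup_of_def by blast
      then have "x = 0" using x0' by simp
      then have "x0 = 0" unfolding x_def by (simp add: vabs_zero_iff)
      then show ?thesis unfolding carrier_mem using normal_UNIV[OF lin] zero_in_dc by blast
    next
      case False
      define e where "e = from_nat_into T"
      have eT: "e n \<in> T" for n unfolding e_def using from_nat_into[OF False] .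
      have Te: "T = range e" unfolding e_def using range_from_nat_into[OF False T(2)] by simp
      have "\<forall>n. \<exists>V. normal_solid_seq \<tau> V \<and> e n \<in> disj_compl (\<Inter>i. V i)"
        using eT T(1) unfolding Ds_def carrier_mem by blast
      then have "\<exists>Vs. \<forall>n. normal_solid_seq \<tau> (Vs n) \<and> e n \<in> disj_compl (\<Inter>i. Vs n i)"
        by (rule choice)
      then obtain Vs where Vs0: "\<forall>n. normal_solid_seq \<tau> (Vs n) \<and> e n \<in> disj_compl (\<Inter>i. Vs n i)"
        by blast
      have Vs: "\<And>n. normal_solid_seq \<tau> (Vs n)" "\<And>n. e n \<in> disj_compl (\<Inter>i. Vs n i)"
        using Vs0 by blast+
      from diag_normal[OF lin Vs(1)] obtain W
        where W0: "normal_solid_seq \<tau> W \<and> (\<forall>k. (\<Inter>n. W n) \<subseteq> (\<Inter>n. Vs k n))" ..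
      have W: "normal_solid_seq \<tau> W" "\<And>k. (\<Inter>n. W n) \<subseteq> (\<Inter>n. Vs k n)"
        using W0 by simp_all
      have "x0 \<in> disj_compl (\<Inter>n. W n)" unfolding disj_compl_def
      proof (intro CollectI ballI)
        fix y assume y: "y \<in> (\<Inter>n. W n)"
        define y' where "y' = vabs y"
        have y'0: "0 \<le> y'" unfolding y'_def by (rule vabs_nonneg)
        have ub: "c \<le> x - inf x y'" if cT: "c \<in> T" for c
        proof -
          obtain n where n: "c = e n" using cT Te by blast
          have "c \<in> disj_compl (\<Inter>n. W n)" using Vs(2)[of n] dc_mono[OF W(2)[of n]] n by blast
          then have "inf (vabs c) y' = 0" using y unfolding disj_compl_def y'_def by blast
          moreover have c0: "0 \<le> c" "c \<le> x" using cT T(1) unfolding Ds_def by auto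
          ultimately have ic: "inf c y' = 0" by (simp add: vabs_pos)
          have "(x - c) + inf c y' = inf (x - c + c) (x - c + y')" by (rule add_inf_l)
          also have "\<dots> = inf x (x - c + y')" by simp
          finally have eq: "(x - c) + inf c y' = inf x (x - c + y')" .
          have "y' \<le> x - c + y'" using c0 by simp
          then have le: "inf x y' \<le> inf x (x - c + y')" by (rule inf_mono[OF order_refl])
          have e2: "inf x (x - c + y') = x - c" using eq ic by simp
          have "inf x y' \<le> x - c" using le unfolding e2 .
          then show ?thesis by (simp add: algebra_simps)
        qed
        then have "x \<le> x - inf x y'" using T(3) unfolding is_sup_of_def by blast
        then have "inf x y' \<le> 0" by simp
        moreover have "0 \<le> inf x y'" using x0' y'0 by simp
        ultimately show "inf (vabs x0) (vabs y) = 0" unfolding x_def y'_def by simp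
      qed
      then show ?thesis unfolding carrier_mem using W(1) by blast
    qed
  qed
qed simp

lemma le_swap: "w \<le> m - b \<Longrightarrow> b \<le> (m::'a::ordered_ab_group_add) - w"
  by (simp add: le_diff_eq add.commute)

lemma directed_transfer:
  assumes g: "inj g" and D: "directed D le"
  shows "directed (g ` D) (\<lambda>a b. le (inv g a) (inv g b))"
proof -
  have Dd: "D \<noteq> {}" "\<forall>a\<in>D. le a a" "\<forall>a\<in>D. \<forall>b\<in>D. \<forall>c\<in>D. le a b \<and> le b c \<longrightarrow> le a c"
      "\<forall>a\<in>D. \<forall>b\<in>D. \<exists>c\<in>D. le a c \<and> le b c"
    using D unfolding directed_def by blast+
  have im: "inv g a \<in> D" if "a \<in> g ` D" for a
    using that g by (metis imageE inv_f_f)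
  show ?thesis unfolding directed_def
  proof (intro conjI ballI impI)
    show "g ` D \<noteq> {}" using Dd(1) by blast
  next
    fix a assume "a \<in> g ` D" then show "le (inv g a) (inv g a)" using Dd(2) im by blast
  next
    fix a b c assume "a \<in> g ` D" "b \<in> g ` D" "c \<in> g ` D"
      "le (inv g a) (inv g b) \<and> le (inv g b) (inv g c)"
    then show "le (inv g a) (inv g c)" using Dd(3) im by blast
  next
    fix a b assume ab: "a \<in> g ` D" "b \<in> g ` D"
    then obtain c where c: "c \<in> D" "le (inv g a) c" "le (inv g b) c" using Dd(4) im by blast
    have "inv g (g c) = c" using g by (rule inv_f_f)
    then show "\<exists>c\<in>g ` D. le (inv g a) (inv g c) \<and> le (inv g b) (inv g c)"
      using c by (intro bexI[of _ "g c"]) auto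
  qed
qed

lemma oc_transfer:
  fixes x :: "'j \<Rightarrow> 'a::{ordered_real_vector,lattice}" and g :: "'j \<Rightarrow> 'i"
  assumes g: "inj g" and oc: "order_conv D le x l"
  shows "order_conv (g ` D) (\<lambda>a b. le (inv g a) (inv g b)) (\<lambda>a. x (inv g a)) l"
proof -
  obtain B leB y where B: "directed (B::'a set) leB"
    "\<forall>b1\<in>B. \<forall>b2\<in>B. leB b1 b2 \<longrightarrow> y b2 \<le> y b1" "is_inf_of (y ` B) 0"
    "\<forall>b\<in>B. net_eventually D le (\<lambda>a. vabs (x a - l) \<le> y b)"
    using oc unfolding order_conv_def by blast
  have "\<forall>b\<in>B. net_eventually (g ` D) (\<lambda>a b. le (inv g a) (inv g b)) (\<lambda>a. vabs (x (inv g a) - l) \<le> y b)"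
  proof
    fix b assume "b \<in> B"
    then show "net_eventually (g ` D) (\<lambda>a b. le (inv g a) (inv g b)) (\<lambda>a. vabs (x (inv g a) - l) \<le> y b)"
      using eventually_transfer[OF g, of D le "\<lambda>a. vabs (x a - l) \<le> y b"] B(4) by simp
  qed
  then show ?thesis unfolding order_conv_def using B(1-3) by blast
qed

lemma oc_const_lb:
  fixes z :: "'j \<Rightarrow> 'a::{ordered_real_vector,lattice}"
  assumes oc: "order_conv D le z 0" and D: "directed D le" and c: "\<And>a. a \<in> D \<Longrightarrow> c \<le> vabs (z a)"
  shows "c \<le> 0"
proof -
  obtain B leB y where B: "directed (B::'a set) leB" "is_inf_of (y ` B) 0"
    "\<forall>b\<in>B. net_eventually D le (\<lambda>a. vabs (z a - 0) \<le> y b)"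
    using oc unfolding order_conv_def by blast
  have "c \<le> y b" if b: "b \<in> B" for b
  proof -
    obtain a0 where a0: "a0 \<in> D" "\<And>a. a \<in> D \<Longrightarrow> le a0 a \<Longrightarrow> vabs (z a - 0) \<le> y b"
      using B(3) b unfolding net_eventually_def by blast
    have "le a0 a0" using D a0(1) unfolding directed_def by blast
    then have "vabs (z a0) \<le> y b" using a0 by simp
    then show ?thesis using c[OF a0(1)] by simp
  qed
  then show ?thesis using B(2) unfolding is_inf_of_def by blast
qed

lemma finsup_facts:
  fixes S :: "'a::{ordered_real_vector,lattice} set"
  assumes sup: "is_sup_of S m" and s0: "s0 \<in> S"
  defines "D0 \<equiv> {F. finite F \<and> s0 \<in> F \<and> F \<subseteq> S}"
  shows "directed D0 (\<subseteq>)"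
    and "\<And>F. F \<in> D0 \<Longrightarrow> Sup_fin F \<le> m"
    and "\<And>F. F \<in> D0 \<Longrightarrow> s0 \<le> Sup_fin F"
    and "\<And>F G. F \<in> D0 \<Longrightarrow> G \<in> D0 \<Longrightarrow> F \<subseteq> G \<Longrightarrow> Sup_fin F \<le> Sup_fin G"
    and "order_conv D0 (\<subseteq>) (\<lambda>F. Sup_fin F) m"
proof -
  show dir: "directed D0 (\<subseteq>)" unfolding directed_def D0_def
  proof (intro conjI ballI impI)
    show "{F. finite F \<and> s0 \<in> F \<and> F \<subseteq> S} \<noteq> {}" using s0 by (intro notI) (drule equalityD1, auto)
  next
    fix a b assume "a \<in> {F. finite F \<and> s0 \<in> F \<and> F \<subseteq> S}" "b \<in> {F. finite F \<and> s0 \<in> F \<and> F \<subseteq> S}"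
    then show "\<exists>c\<in>{F. finite F \<and> s0 \<in> F \<and> F \<subseteq> S}. a \<subseteq> c \<and> b \<subseteq> c"
      by (intro bexI[of _ "a \<union> b"]) auto
  qed auto
  have ub: "s \<le> m" if "s \<in> S" for s using sup that unfolding is_sup_of_def by blast
  show le_m: "Sup_fin F \<le> m" if "F \<in> D0" for F
    using that unfolding D0_def by (intro Sup_fin.boundedI) (auto intro: ub)
  show s0le: "s0 \<le> Sup_fin F" if "F \<in> D0" for F
    using that unfolding D0_def by (intro Sup_fin.coboundedI) auto
  show mono: "Sup_fin F \<le> Sup_fin G" if "F \<in> D0" "G \<in> D0" "F \<subseteq> G" for F G
    using that unfolding D0_def by (intro Sup_fin.subset_imp) auto
  show "order_conv D0 (\<subseteq>) (\<lambda>F. Sup_fin F) m" unfolding order_conv_def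
  proof (intro exI conjI)
    let ?B = "(\<lambda>F. m - Sup_fin F) ` D0"
    show "directed ?B (\<lambda>b1 b2. b2 \<le> b1)" unfolding directed_def
    proof (intro conjI ballI impI)
      show "?B \<noteq> {}" using dir unfolding directed_def by blast
    next
      fix a b c :: 'a assume "b \<le> a \<and> c \<le> b" then show "c \<le> a" by (meson order_trans)
    next
      fix b1 b2 assume "b1 \<in> ?B" "b2 \<in> ?B"
      then obtain F1 F2 where F: "F1 \<in> D0" "F2 \<in> D0" "b1 = m - Sup_fin F1" "b2 = m - Sup_fin F2" by blast
      have FU: "F1 \<union> F2 \<in> D0" using F(1,2) unfolding D0_def by auto
      have "m - Sup_fin (F1 \<union> F2) \<le> b1" "m - Sup_fin (F1 \<union> F2) \<le> b2"
        using mono[OF F(1) FU] mono[OF F(2) FU] F(3,4) by auto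
      then show "\<exists>c\<in>?B. c \<le> b1 \<and> c \<le> b2" using FU by blast
    qed simp
    show "\<forall>b1\<in>?B. \<forall>b2\<in>?B. b2 \<le> b1 \<longrightarrow> id b2 \<le> id b1" by simp
    show "is_inf_of (id ` ?B) 0" unfolding is_inf_of_def
    proof (intro conjI allI impI ballI)
      fix s assume "s \<in> id ` ?B" then show "0 \<le> s" using le_m by auto
    next
      fix w assume lb: "\<forall>s\<in>id ` ?B. w \<le> s"
      have "s \<le> m - w" if "s \<in> S" for s
      proof -
        have F: "{s0, s} \<in> D0" using that s0 unfolding D0_def by auto
        then have "w \<le> m - Sup_fin {s0, s}" using lb by auto
        moreover have "s \<le> Sup_fin {s0, s}" by (rule Sup_fin.coboundedI) auto
        ultimately show ?thesis using le_swap order_trans by metis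
      qed
      then have "m \<le> m - w" using sup unfolding is_sup_of_def by blast
      then show "w \<le> 0" by simp
    qed
    show "\<forall>b\<in>?B. net_eventually D0 (\<subseteq>) (\<lambda>F. vabs (Sup_fin F - m) \<le> id b)"
    proof
      fix b assume "b \<in> ?B"
      then obtain F0 where F0: "F0 \<in> D0" "b = m - Sup_fin F0" by blast
      have "vabs (Sup_fin F - m) \<le> id b" if "F \<in> D0" "F0 \<subseteq> F" for F
      proof -
        have "0 \<le> m - Sup_fin F" using le_m[OF that(1)] by simp
        then have "vabs (m - Sup_fin F) = m - Sup_fin F" by (rule vabs_pos)
        moreover have "vabs (Sup_fin F - m) = vabs (m - Sup_fin F)" using vabs_minus[of "m - Sup_fin F"] by simp
        ultimately show ?thesis using mono[OF F0(1) that] F0(2) by simp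
      qed
      then show "net_eventually D0 (\<subseteq>) (\<lambda>F. vabs (Sup_fin F - m) \<le> id b)"
        unfolding net_eventually_def using F0 by blast
    qed
  qed
qed

lemma vabs_swap: "b \<le> a \<Longrightarrow> vabs (b - a) = a - (b::'a::{ordered_real_vector,lattice})"
proof -
  assume "b \<le> a"
  then have "0 \<le> a - b" by simp
  then have "vabs (a - b) = a - b" by (rule vabs_pos)
  moreover have "vabs (b - a) = vabs (a - b)" using vabs_minus[of "a - b"] by simp
  ultimately show ?thesis by simp
qed

lemma carrier_csp:
  fixes \<tau> :: "'a::{ordered_real_vector,lattice} topology" and f :: "'a set \<Rightarrow> 'i"
  assumes lin: "linear_topology \<tau>" and olb: "o_lebesgue TYPE('i) \<tau>" and f: "inj f"
    and C: "carrier_top \<tau> = UNIV"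
  shows "countable_sup_property TYPE('a)"
  unfolding countable_sup_property_def
proof (intro allI impI)
  fix S :: "'a set" and m assume sup: "is_sup_of S m"
  show "\<exists>T\<subseteq>S. countable T \<and> is_sup_of T m"
  proof (cases "S = {}")
    case True then show ?thesis using sup by blast
  next
    case False
    then obtain s0 where s0: "s0 \<in> S" by blast
    define D0 where "D0 = {F. finite F \<and> s0 \<in> F \<and> F \<subseteq> S}"
    note fs = finsup_facts[OF sup s0, folded D0_def]
    have t: "net_tendsto \<tau> D0 (\<subseteq>) (\<lambda>F. Sup_fin F) m"
      by (rule transfer_olb[OF f olb fs(1) fs(5)])
    have "m - s0 \<in> carrier_top \<tau>" using C by simp
    then obtain V where V: "normal_solid_seq \<tau> V" "m - s0 \<in> disj_compl (\<Inter>n. V n)"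
      unfolding carrier_mem by blast
    have "\<forall>n. \<exists>F. F \<in> D0 \<and> Sup_fin F - m \<in> V n"
    proof
      fix n
      obtain F0 where F0: "F0 \<in> D0" "\<And>F. F \<in> D0 \<Longrightarrow> F0 \<subseteq> F \<Longrightarrow> Sup_fin F - m \<in> V n"
        using tendsto_nbhd[OF lin t normal_nbhd[OF V(1)]] unfolding net_eventually_def by blast
      then show "\<exists>F. F \<in> D0 \<and> Sup_fin F - m \<in> V n" by blast
    qed
    then have "\<exists>Fs. \<forall>n. Fs n \<in> D0 \<and> Sup_fin (Fs n) - m \<in> V n" by (rule choice)
    then obtain Fs where Fs0: "\<forall>n. Fs n \<in> D0 \<and> Sup_fin (Fs n) - m \<in> V n" by blast
    have FsD: "Fs n \<in> D0" and FsV: "Sup_fin (Fs n) - m \<in> V n" for n using Fs0 by blast+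
    define T where "T = (\<Union>n. Fs n)"
    have TS: "T \<subseteq> S" unfolding T_def using FsD unfolding D0_def by blast
    have cT: "countable T" unfolding T_def using FsD unfolding D0_def
      by (intro countable_UN) (auto intro: countable_finite)
    have "is_sup_of T m" unfolding is_sup_of_def
    proof (intro conjI allI impI ballI)
      fix s assume "s \<in> T" then show "s \<le> m" using TS sup unfolding is_sup_of_def by blast
    next
      fix u assume ub: "\<forall>s\<in>T. s \<le> u"
      define v where "v = m - inf m u"
      have v0: "0 \<le> v" unfolding v_def by simp
      have "v \<in> V n" for n
      proof -
        have "Sup_fin (Fs n) \<le> u"
          using FsD[of n] ub unfolding D0_def T_def by (intro Sup_fin.boundedI) auto
        then have "Sup_fin (Fs n) \<le> inf m u" using fs(2)[OF FsD[of n]] by simp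
        then have vle: "v \<le> m - Sup_fin (Fs n)" unfolding v_def by (simp add: algebra_simps)
        have "vabs (Sup_fin (Fs n) - m) = m - Sup_fin (Fs n)"
          by (rule vabs_swap[OF fs(2)[OF FsD[of n]]])
        then have "vabs v \<le> vabs (Sup_fin (Fs n) - m)" using vle vabs_pos[OF v0] by simp
        then show ?thesis using solid_mem[OF normal_solid[OF V(1)] FsV] by blast
      qed
      then have vN: "v \<in> (\<Inter>n. V n)" by blast
      have "s0 \<in> T" unfolding T_def using FsD[of 0] unfolding D0_def by blast
      then have "s0 \<le> u" "s0 \<le> m" using ub sup s0 unfolding is_sup_of_def by blast+
      then have "s0 \<le> inf m u" by simp
      then have vms: "v \<le> m - s0" unfolding v_def by (simp add: algebra_simps)
      have ms0: "0 \<le> m - s0" using \<open>s0 \<le> m\<close> by simp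
      have "inf (vabs (m - s0)) (vabs v) = 0" using V(2) vN unfolding disj_compl_def by blast
      then have "inf (m - s0) v = 0" using vabs_pos[OF ms0] vabs_pos[OF v0] by simp
      then have "v = 0" using vms by (simp add: inf.absorb2)
      then have "m = inf m u" unfolding v_def by simp
      then show "m \<le> u" by (metis inf.bounded_iff order_refl)
    qed
    then show ?thesis using TS cT by blast
  qed
qed

lemma net4_csp:
  fixes \<tau> :: "'a::{ordered_real_vector,lattice} topology" and f :: "'a set \<Rightarrow> 'i"
  assumes olb: "o_lebesgue TYPE('i) \<tau>" and f: "inj f"
    and H: "\<forall>(D :: 'i set) le x l. directed D le \<and> (\<forall>a\<in>D. 0 \<le> x a) \<and>
         (\<forall>a\<in>D. \<forall>b\<in>D. le a b \<longrightarrow> x a \<le> x b) \<and> net_tendsto \<tau> D le x l \<longrightarrow>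
         (\<exists>s. embedded_seq D le s \<and> uo_conv (UNIV :: nat set) (\<le>) (x \<circ> s) l)"
  shows "countable_sup_property TYPE('a)"
  unfolding countable_sup_property_def
proof (intro allI impI)
  fix S :: "'a set" and m assume sup: "is_sup_of S m"
  show "\<exists>T\<subseteq>S. countable T \<and> is_sup_of T m"
  proof (cases "S = {}")
    case True then show ?thesis using sup by blast
  next
    case False
    then obtain s0 where s0: "s0 \<in> S" by blast
    define D0 where "D0 = {F. finite F \<and> s0 \<in> F \<and> F \<subseteq> S}"
    note fs = finsup_facts[OF sup s0, folded D0_def]
    define D where "D = f ` D0"
    define le where "le = (\<lambda>a b. inv f a \<subseteq> inv f b)"
    define x where "x = (\<lambda>a. Sup_fin (inv f a) - s0)"
    have im: "inv f a \<in> D0" if "a \<in> D" for a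
      using that f unfolding D_def by (metis imageE inv_f_f)
    have dir: "directed D le" unfolding D_def le_def by (rule directed_transfer[OF f fs(1)])
    have pos: "\<forall>a\<in>D. 0 \<le> x a" unfolding x_def using fs(3) im by simp
    have mono: "\<forall>a\<in>D. \<forall>b\<in>D. le a b \<longrightarrow> x a \<le> x b" unfolding x_def le_def
      using fs(4) im by (simp add: diff_right_mono)
    have oc0: "order_conv D0 (\<subseteq>) (\<lambda>F. Sup_fin F - s0) (m - s0)"
      using fs(5) unfolding order_conv_def by simp
    have "order_conv D le x (m - s0)" unfolding D_def le_def x_def
      by (rule oc_transfer[OF f oc0])
    then have t: "net_tendsto \<tau> D le x (m - s0)" using olb dir unfolding o_lebesgue_def by blast
    obtain s where s: "embedded_seq D le s" "uo_conv (UNIV :: nat set) (\<le>) (x \<circ> s) (m - s0)"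
      using H dir pos mono t by blast
    define Fs where "Fs = (\<lambda>n. inv f (s n))"
    have FsD: "Fs n \<in> D0" for n unfolding Fs_def using s(1) im unfolding embedded_seq_def by blast
    define T where "T = (\<Union>n. Fs n)"
    have TS: "T \<subseteq> S" unfolding T_def using FsD unfolding D0_def by blast
    have cT: "countable T" unfolding T_def using FsD unfolding D0_def
      by (intro countable_UN) (auto intro: countable_finite)
    have "is_sup_of T m" unfolding is_sup_of_def
    proof (intro conjI allI impI ballI)
      fix t assume "t \<in> T" then show "t \<le> m" using TS sup unfolding is_sup_of_def by blast
    next
      fix u assume ub: "\<forall>s\<in>T. s \<le> u"
      define v where "v = m - inf m u"
      have v0: "0 \<le> v" unfolding v_def by simp
      have cl: "v \<le> vabs (inf (vabs ((x \<circ> s) n - (m - s0))) (vabs v) - 0)" for n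
      proof -
        have "Sup_fin (Fs n) \<le> u"
          using FsD[of n] ub unfolding D0_def T_def by (intro Sup_fin.boundedI) auto
        then have "Sup_fin (Fs n) \<le> inf m u" using fs(2)[OF FsD[of n]] by simp
        then have vle: "v \<le> m - Sup_fin (Fs n)" unfolding v_def by (simp add: algebra_simps)
        have e1: "vabs (Sup_fin (Fs n) - m) = m - Sup_fin (Fs n)"
          by (rule vabs_swap[OF fs(2)[OF FsD[of n]]])
        have e2: "(x \<circ> s) n - (m - s0) = Sup_fin (Fs n) - m" unfolding x_def Fs_def by simp
        have "inf (vabs ((x \<circ> s) n - (m - s0))) (vabs v) = v"
          unfolding e2 e1 vabs_pos[OF v0] using vle by (simp add: inf.absorb2)
        then show ?thesis using vabs_pos[OF v0] by simp
      qed
      have dN: "directed (UNIV :: nat set) (\<le>)" unfolding directed_def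
        by (auto intro: order_trans) (meson le_cases)
      have "v \<le> 0"
        by (rule oc_const_lb[OF s(2)[unfolded uo_conv_def, rule_format, of v] dN]) (use cl in simp)
      then have "v = 0" using v0 by simp
      then have "m = inf m u" unfolding v_def by simp
      then show "m \<le> u" by (metis inf.bounded_iff order_refl)
    qed
    then show ?thesis using TS cT by blast
  qed
qed

lemma keyineq:
  fixes z u p r :: "'a::{ordered_real_vector,lattice}"
  assumes z0: "0 \<le> z" and r0: "0 \<le> r" and pu: "p \<le> u" and rp: "r \<le> p - inf p z"
  shows "inf z u + inf (u - p + r) (real c *\<^sub>R r) \<le> u"
proof -
  define d where "d = p - z"
  define Dp where "Dp = sup d 0"
  define Dm where "Dm = sup (- d) 0"
  define X where "X = inf (u - p + r) (real c *\<^sub>R r)"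
  define Y where "Y = sup (u - z) 0"
  have rDp: "r \<le> Dp" using rp unfolding Dp_def d_def using inf_eq_sub[of p z] by simp
  have Dm0: "0 \<le> Dm" unfolding Dm_def by simp
  have Y0: "0 \<le> Y" unfolding Y_def by simp
  have rDm: "inf r Dm = 0"
  proof -
    have "inf r Dm \<le> inf Dp Dm" using rDp by (rule inf_mono) simp
    also have "\<dots> = 0" unfolding Dp_def Dm_def by (rule pos_neg_disj)
    finally show ?thesis using r0 Dm0 by (simp add: order.antisym)
  qed
  have cr0: "0 \<le> real c *\<^sub>R r" using r0 by (simp add: scaleR_nonneg_nonneg)
  have X0: "0 \<le> X" unfolding X_def using pu r0 cr0 by simp
  have XDm: "inf X Dm = 0"
  proof -
    have "inf Dm (real c *\<^sub>R r) = 0" by (rule disj_mult[OF Dm0 r0]) (use rDm in \<open>simp add: inf.commute\<close>)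
    then have "inf X Dm \<le> 0" unfolding X_def by (metis inf.commute inf.coboundedI2 inf_mono order_refl)
    then show ?thesis using X0 Dm0 by (simp add: order.antisym)
  qed
  have "X \<le> u - p + r" unfolding X_def by simp
  also have "\<dots> \<le> u - p + Dp" using rDp by simp
  also have "Dp = d + Dm" unfolding Dp_def Dm_def by (rule pos_part_eq)
  also have "u - p + (d + Dm) = (u - z) + Dm" unfolding d_def by (simp add: algebra_simps)
  also have "\<dots> \<le> Y + Dm" unfolding Y_def by simp
  finally have "X \<le> Y + Dm" .
  then have XY: "X \<le> Y" using disj_le[OF X0 Y0 Dm0 _ XDm] by blast
  have "inf z u = u - Y" unfolding Y_def using inf_eq_sub[of u z] by (simp add: inf.commute)
  then show ?thesis using XY unfolding X_def by simp
qed

lemma sum_in_normal: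
  assumes W: "normal_solid_seq \<tau> W" and zW: "\<And>n. z n \<in> W n"
  shows "sum z {Suc k..<Suc k + d} \<in> W k"
proof (induction d arbitrary: k)
  case 0 then show ?case using normal_zero[OF W] by simp
next
  case (Suc d)
  have "sum z {Suc k..<Suc k + Suc d} = z (Suc k) + sum z {Suc (Suc k)..<Suc (Suc k) + d}"
    by (subst sum.atLeast_Suc_lessThan) simp_all
  moreover have "sum z {Suc (Suc k)..<Suc (Suc k) + d} \<in> W (Suc k)" by (rule Suc.IH)
  ultimately show ?case using normal_add[OF W zW[of "Suc k"]] by simp
qed


lemma lemma_star:
  fixes \<tau> :: "'a::{ordered_real_vector,lattice} topology" and f :: "'a set \<Rightarrow> 'i"
    and W :: "nat \<Rightarrow> 'a set" and z :: "nat \<Rightarrow> 'a"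
  assumes arch: "archimedean_vl TYPE('a)" and lin: "linear_topology \<tau>"
    and olb: "o_lebesgue TYPE('i) \<tau>" and f: "inj f"
    and W: "normal_solid_seq \<tau> W"
    and z0: "\<And>n. 0 \<le> z n" and zW: "\<And>n. z n \<in> W n" and zd: "\<And>n. z n \<in> disj_compl (\<Inter>n. W n)"
    and u0: "0 \<le> u"
  shows "order_conv (UNIV::nat set) (\<le>) (\<lambda>n. inf (z n) u) 0"
proof -
  define B where "B = {b. \<exists>k. \<forall>n\<ge>k. inf (z n) u \<le> b}"
  have uB: "u \<in> B" unfolding B_def by auto
  have B0: "0 \<le> b" if bB: "b \<in> B" for b
  proof -
    obtain k where "\<forall>n\<ge>k. inf (z n) u \<le> b" using bB unfolding B_def by blast
    then have "inf (z k) u \<le> b" by simp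
    moreover have "0 \<le> inf (z k) u" using z0 u0 by simp
    ultimately show ?thesis by (rule order_trans[rotated])
  qed
  have NI: "ideal_vl (\<Inter>n. W n)" by (rule normal_N_ideal[OF W])
  have Ns: "solid (\<Inter>n. W n)" using NI unfolding ideal_vl_def by blast
  have lower: "p = 0" if p0: "0 \<le> p" and pl: "\<And>b. b \<in> B \<Longrightarrow> p \<le> b" for p
  proof -
    have pu: "p \<le> u" using pl uB by blast
    have pd: "p \<in> disj_compl (\<Inter>n. W n)" unfolding disj_compl_def
    proof (intro CollectI ballI)
      fix y assume y: "y \<in> (\<Inter>n. W n)"
      define y' where "y' = vabs y"
      have y'0: "0 \<le> y'" unfolding y'_def by (rule vabs_nonneg)
      define t where "t = inf p y'"
      have t0: "0 \<le> t" unfolding t_def using p0 y'0 by simp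
      have ty: "t \<le> y'" "t \<le> p" unfolding t_def by simp_all
      have zy: "inf (z n) y' = 0" for n
        using zd[of n] y vabs_pos[OF z0[of n]] unfolding disj_compl_def y'_def by auto
      have ind: "real k *\<^sub>R t \<le> u" for k
      proof (induction k)
        case 0 then show ?case using u0 by simp
      next
        case (Suc k)
        have kt0: "0 \<le> real k *\<^sub>R t" using t0 by (simp add: scaleR_nonneg_nonneg)
        have "inf (z n) u \<le> u - real k *\<^sub>R t" for n
        proof -
          have dj0: "inf (z n) (real k *\<^sub>R y') = 0" by (rule disj_mult[OF z0 y'0 zy])
          have "inf (inf (z n) u) (real k *\<^sub>R t) \<le> inf (z n) (real k *\<^sub>R y')"
            by (rule inf_mono) (simp_all add: scaleR_left_mono ty(1))
          then have dj: "inf (inf (z n) u) (real k *\<^sub>R t) = 0"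
            using dj0 kt0 z0[of n] u0 by (simp add: order.antisym)
          have "inf (z n) u + real k *\<^sub>R t = sup (inf (z n) u) (real k *\<^sub>R t)" by (rule disj_sum[OF dj])
          also have "\<dots> \<le> u" using Suc.IH by simp
          finally show ?thesis by (simp add: algebra_simps)
        qed
        then have "u - real k *\<^sub>R t \<in> B" unfolding B_def by blast
        then have "p \<le> u - real k *\<^sub>R t" by (rule pl)
        then have h: "p + real k *\<^sub>R t \<le> u" by (simp add: algebra_simps)
        have "t + real k *\<^sub>R t \<le> p + real k *\<^sub>R t" using ty(2) by (rule add_right_mono)
        then have "t + real k *\<^sub>R t \<le> u" using h by (rule order_trans)
        then show ?case by (simp add: algebra_simps)
      qed
      have "t = 0" by (rule arch_zero[OF arch t0 ind])
      then show "inf (vabs p) (vabs y) = 0" unfolding t_def y'_def vabs_pos[OF p0] .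
    qed
    have pW: "p \<in> W j" for j
    proof (cases "p = 0")
      case True then show ?thesis using normal_zero[OF W] by simp
    next
      case pn0: False
      define k where "k = Suc j"
      define s where "s = (\<lambda>d. sum z {Suc k..<Suc k + d})"
      define q where "q = (\<lambda>d. p - inf p (s d))"
      have s0: "0 \<le> s d" for d unfolding s_def using z0 by (simp add: sum_nonneg)
      have sW: "s d \<in> W k" for d unfolding s_def by (rule sum_in_normal[OF W zW])
      have smono: "s d1 \<le> s d2" if "d1 \<le> d2" for d1 d2
        unfolding s_def using that z0 by (intro sum_mono2) auto
      have q0: "0 \<le> q d" for d unfolding q_def by simp
      have qmono: "q d2 \<le> q d1" if "d1 \<le> d2" for d1 d2
        unfolding q_def using smono[OF that] by (simp add: inf.coboundedI2)
      have zs: "z n \<le> s (n - k)" if nk: "Suc k \<le> n" for n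
      proof -
        let ?A = "{Suc k..<Suc k + (n - k)}"
        have nA: "n \<in> ?A" using nk by simp
        have "sum z ?A = z n + sum z (?A - {n})" by (rule sum.remove[OF _ nA]) simp
        moreover have "0 \<le> sum z (?A - {n})" using z0 by (simp add: sum_nonneg)
        ultimately show ?thesis unfolding s_def by simp
      qed
      have qinf: "r \<le> 0" if rl: "\<And>d. r \<le> q d" for r
      proof -
        define r' where "r' = sup r 0"
        have r'0: "0 \<le> r'" unfolding r'_def by simp
        have r'q: "r' \<le> q d" for d unfolding r'_def using rl q0 by simp
        have r'z: "r' \<le> p - inf p (z n)" if "Suc k \<le> n" for n
        proof -
          have "inf p (z n) \<le> inf p (s (n - k))" using zs[OF that] by (rule inf_mono[OF order_refl])
          then have "q (n - k) \<le> p - inf p (z n)" unfolding q_def by simp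
          then show ?thesis using r'q[of "n - k"] by simp
        qed
        have "inf (u - p + r') (real c *\<^sub>R r') \<le> u - p" for c
        proof -
          have "inf (z n) u \<le> u - inf (u - p + r') (real c *\<^sub>R r')" if "Suc k \<le> n" for n
            using keyineq[OF z0 r'0 pu r'z[OF that], of c] by (simp add: algebra_simps)
          then have "u - inf (u - p + r') (real c *\<^sub>R r') \<in> B" unfolding B_def by blast
          then have "p \<le> u - inf (u - p + r') (real c *\<^sub>R r')" by (rule pl)
          then show ?thesis by (simp add: algebra_simps)
        qed
        then have "r' = 0" using arch_final[OF arch _ r'0, of "u - p"] pu by simp
        then show ?thesis unfolding r'_def by (metis sup.cobounded1)
      qed
      have dN: "directed (UNIV :: nat set) (\<le>)" unfolding directed_def
        by (auto intro: order_trans) (meson le_cases)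
      have oc: "order_conv (UNIV::nat set) (\<le>) (\<lambda>d. inf p (s d)) p" unfolding order_conv_def
      proof (intro exI conjI)
        show "directed (range q) (\<lambda>b1 b2. b2 \<le> b1)" unfolding directed_def
        proof (intro conjI ballI impI)
          show "range q \<noteq> {}" by simp
        next
          fix a b c :: 'a assume "b \<le> a \<and> c \<le> b" then show "c \<le> a" by (meson order_trans)
        next
          fix b1 b2 assume "b1 \<in> range q" "b2 \<in> range q"
          then obtain d1 d2 where "b1 = q d1" "b2 = q d2" by blast
          then show "\<exists>c\<in>range q. c \<le> b1 \<and> c \<le> b2"
            using qmono[of d1 "max d1 d2"] qmono[of d2 "max d1 d2"] by auto
        qed simp
        show "\<forall>b1\<in>range q. \<forall>b2\<in>range q. b2 \<le> b1 \<longrightarrow> id b2 \<le> id b1" by simp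
        show "is_inf_of (id ` range q) 0" unfolding is_inf_of_def
          using q0 qinf by auto
        show "\<forall>b\<in>range q. net_eventually UNIV (\<le>) (\<lambda>d. vabs (inf p (s d) - p) \<le> id b)"
        proof
          fix b assume "b \<in> range q"
          then obtain d0 where d0: "b = q d0" by blast
          have "vabs (inf p (s d) - p) \<le> id b" if "d0 \<le> d" for d
          proof -
            have "vabs (inf p (s d) - p) = q d" unfolding q_def by (rule vabs_swap) simp
            then show ?thesis using qmono[OF that] d0 by simp
          qed
          then show "net_eventually UNIV (\<le>) (\<lambda>d. vabs (inf p (s d) - p) \<le> id b)"
            unfolding net_eventually_def by blast
        qed
      qed
      have g: "inj (\<lambda>n::nat. f {real n *\<^sub>R p})"
      proof (rule injI)
        fix n m :: nat assume "f {real n *\<^sub>R p} = f {real m *\<^sub>R p}"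
        then have "real n *\<^sub>R p = real m *\<^sub>R p" using f unfolding inj_def by blast
        then show "n = m" using pn0 by (simp add: scaleR_cancel_right)
      qed
      have t: "net_tendsto \<tau> UNIV (\<le>) (\<lambda>d. inf p (s d)) p" by (rule transfer_olb[OF g olb dN oc])
      have V1: "nbhd0 \<tau> (W k)" "solid (W k)" "set_plus_vl (W k) (W k) \<subseteq> W j"
        using W unfolding normal_solid_seq_def k_def by simp_all
      show "p \<in> W j"
      proof (rule tendsto_closed[OF lin dN t V1])
        fix d :: nat
        have "vabs (inf p (s d)) \<le> vabs (s d)" using vabs_pos[OF s0[of d]] p0 s0[of d] by (simp add: vabs_pos)
        then show "inf p (s d) \<in> W k" using solid_mem[OF V1(2) sW] by blast
      qed
    qed
    have "inf (vabs p) (vabs p) = 0" using pd pW unfolding disj_compl_def by blast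
    then show "p = 0" using vabs_zero_iff[of p] by simp
  qed
  show ?thesis unfolding order_conv_def
  proof (intro exI conjI)
    show "directed B (\<lambda>b1 b2. b2 \<le> b1)" unfolding directed_def
    proof (intro conjI ballI impI)
      show "B \<noteq> {}" using uB by blast
    next
      fix a b c :: 'a assume "b \<le> a \<and> c \<le> b" then show "c \<le> a" by (meson order_trans)
    next
      fix b1 b2 assume "b1 \<in> B" "b2 \<in> B"
      then obtain k1 k2 where k: "\<forall>n\<ge>k1. inf (z n) u \<le> b1" "\<forall>n\<ge>k2. inf (z n) u \<le> b2"
        unfolding B_def by blast
      then have "\<forall>n\<ge>max k1 k2. inf (z n) u \<le> inf b1 b2" by simp
      then have "inf b1 b2 \<in> B" unfolding B_def by blast
      then show "\<exists>c\<in>B. c \<le> b1 \<and> c \<le> b2" by (intro bexI[of _ "inf b1 b2"]) simp_all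
    qed simp
    show "\<forall>b1\<in>B. \<forall>b2\<in>B. b2 \<le> b1 \<longrightarrow> id b2 \<le> id b1" by simp
    show "is_inf_of (id ` B) 0" unfolding is_inf_of_def
    proof (intro conjI allI impI ballI)
      fix b assume "b \<in> id ` B" then show "0 \<le> b" using B0 by auto
    next
      fix w assume lb: "\<forall>b\<in>id ` B. w \<le> b"
      have "sup w 0 = 0"
      proof (rule lower)
        fix b assume "b \<in> B"
        then show "sup w 0 \<le> b" using lb B0 by auto
      qed simp
      then show "w \<le> 0" by (metis sup.cobounded1)
    qed
    show "\<forall>b\<in>B. net_eventually UNIV (\<le>) (\<lambda>n. vabs (inf (z n) u - 0) \<le> id b)"
    proof
      fix b assume "b \<in> B"
      then obtain k where k: "\<forall>n\<ge>k. inf (z n) u \<le> b" unfolding B_def by blast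
      have "vabs (inf (z n) u - 0) \<le> id b" if "k \<le> n" for n
        using k that vabs_pos[of "inf (z n) u"] z0[of n] u0 by simp
      then show "net_eventually UNIV (\<le>) (\<lambda>n. vabs (inf (z n) u - 0) \<le> id b)"
        unfolding net_eventually_def by blast
    qed
  qed
qed

lemma csp_net3:
  fixes \<tau> :: "'a::{ordered_real_vector,lattice} topology" and f :: "'a set \<Rightarrow> 'i"
    and D :: "'j set" and x :: "'j \<Rightarrow> 'a"
  assumes arch: "archimedean_vl TYPE('a)" and lin: "linear_topology \<tau>"
    and olb: "o_lebesgue TYPE('i) \<tau>" and f: "inj f"
    and C: "carrier_top \<tau> = UNIV" and D: "directed D le" and t: "net_tendsto \<tau> D le x l"
  shows "\<exists>s. embedded_seq D le s \<and> uo_conv (UNIV :: nat set) (\<le>) (x \<circ> s) l"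
proof -
  define z where "z = (\<lambda>a. vabs (x a - l))"
  have Dd: "D \<noteq> {}" "\<forall>a\<in>D. le a a" "\<forall>a\<in>D. \<forall>b\<in>D. \<forall>c\<in>D. le a b \<and> le b c \<longrightarrow> le a c"
      "\<forall>a\<in>D. \<forall>b\<in>D. \<exists>c\<in>D. le a c \<and> le b c"
    using D unfolding directed_def by blast+
  define NL where "NL = (\<not> (\<exists>m\<in>D. \<forall>a\<in>D. le a m))"
  have ev: "\<exists>a0\<in>D. \<forall>a\<in>D. le a0 a \<longrightarrow> z a \<in> U" if U: "nbhd0 \<tau> U" "solid U" for U
  proof -
    obtain a0 where a0: "a0 \<in> D" "\<forall>a\<in>D. le a0 a \<longrightarrow> x a - l \<in> U"
      using tendsto_nbhd[OF lin t U(1)] unfolding net_eventually_def by blast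
    then show ?thesis unfolding z_def using solid_vabs[OF U(2)] by blast
  qed
  have stepA: "\<exists>a'. a' \<in> D \<and> le a a' \<and> (NL \<longrightarrow> \<not> le a' a) \<and> (\<forall>b\<in>D. le a' b \<longrightarrow> z b \<in> U)"
    if a: "a \<in> D" and U: "nbhd0 \<tau> U" "solid U" for a U
  proof -
    obtain a0 where a0: "a0 \<in> D" "\<forall>b\<in>D. le a0 b \<longrightarrow> z b \<in> U" using ev[OF U] by blast
    obtain c where c: "c \<in> D" "le a c" "le a0 c" using Dd(4) a a0(1) by blast
    show ?thesis
    proof (cases NL)
      case False
      have "\<forall>b\<in>D. le c b \<longrightarrow> z b \<in> U" using a0 c Dd(3) by blast
      then show ?thesis using c False by blast
    next
      case True
      then obtain e where e: "e \<in> D" "\<not> le e a" using a unfolding NL_def by blast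
      obtain c' where c': "c' \<in> D" "le c c'" "le e c'" using Dd(4) c(1) e(1) by blast
      have "le a c'" using Dd(3) a c c' by blast
      moreover have "\<not> le c' a" using Dd(3) e c' a by blast
      moreover have "\<forall>b\<in>D. le c' b \<longrightarrow> z b \<in> U" using a0 c c' Dd(3) by blast
      ultimately show ?thesis using c' by blast
    qed
  qed
  have stepV: "\<exists>V. normal_solid_seq \<tau> V \<and> v \<in> disj_compl (\<Inter>n. V n)" for v
    using C unfolding carrier_mem[symmetric] by blast
  obtain a0 where a0: "a0 \<in> D" using Dd(1) by blast
  obtain V0 where V0: "normal_solid_seq \<tau> V0" "z a0 \<in> disj_compl (\<Inter>n. V0 n)" using stepV by blast
  define nxtA where "nxtA = (\<lambda>a U. SOME a'. a' \<in> D \<and> le a a' \<and> (NL \<longrightarrow> \<not> le a' a) \<and> (\<forall>b\<in>D. le a' b \<longrightarrow> z b \<in> U))"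
  define nxtV where "nxtV = (\<lambda>v. SOME V. normal_solid_seq \<tau> V \<and> v \<in> disj_compl (\<Inter>n. V n))"
  have nA: "nxtA a U \<in> D \<and> le a (nxtA a U) \<and> (NL \<longrightarrow> \<not> le (nxtA a U) a) \<and> (\<forall>b\<in>D. le (nxtA a U) b \<longrightarrow> z b \<in> U)"
    if "a \<in> D" "nbhd0 \<tau> U" "solid U" for a U
    unfolding nxtA_def by (rule someI_ex) (rule stepA[OF that])
  have nV: "normal_solid_seq \<tau> (nxtV v) \<and> v \<in> disj_compl (\<Inter>n. nxtV v n)" for v
  proof -
    from someI_ex[OF stepV[of v]] show ?thesis unfolding nxtV_def by simp
  qed
  define step where "step = (\<lambda>n (p :: 'j \<times> (nat \<Rightarrow> 'a set)).
     (nxtA (fst p) (snd p (Suc n)), (\<lambda>i. snd p i \<inter> nxtV (z (nxtA (fst p) (snd p (Suc n)))) i)))"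
  define st where "st = rec_nat (a0, V0) step"
  define al where "al = (\<lambda>n. fst (st n))"
  define F where "F = (\<lambda>n. snd (st n))"
  have st0: "al 0 = a0" "F 0 = V0" unfolding al_def F_def st_def by simp_all
  have stS: "al (Suc n) = nxtA (al n) (F n (Suc n))"
    "F (Suc n) = (\<lambda>i. F n i \<inter> nxtV (z (al (Suc n))) i)" for n
    unfolding al_def F_def st_def step_def by (simp_all add: case_prod_beta)
  have inv: "al n \<in> D \<and> normal_solid_seq \<tau> (F n) \<and> z (al n) \<in> disj_compl (\<Inter>i. F n i)" for n
  proof (induction n)
    case 0 then show ?case using a0 V0 st0 by simp
  next
    case (Suc n)
    then have IH: "al n \<in> D" "normal_solid_seq \<tau> (F n)" by blast+
    have A: "al (Suc n) \<in> D" using nA[OF IH(1) normal_nbhd[OF IH(2)] normal_solid[OF IH(2)]] stS(1) by simp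
    have nv: "normal_solid_seq \<tau> (nxtV (z (al (Suc n))))" "z (al (Suc n)) \<in> disj_compl (\<Inter>i. nxtV (z (al (Suc n))) i)"
      using nV by blast+
    have N: "normal_solid_seq \<tau> (F (Suc n))" unfolding stS(2) by (rule normal_Int[OF IH(2) nv(1)])
    have "(\<Inter>i. F (Suc n) i) \<subseteq> (\<Inter>i. nxtV (z (al (Suc n))) i)" unfolding stS(2) by blast
    then have "z (al (Suc n)) \<in> disj_compl (\<Inter>i. F (Suc n) i)" using nv(2) dc_mono by blast
    then show ?case using A N by blast
  qed
  have alD: "al n \<in> D" and FN: "normal_solid_seq \<tau> (F n)" and zd: "z (al n) \<in> disj_compl (\<Inter>i. F n i)" for n
    using inv by blast+
  have stepP: "le (al n) (al (Suc n)) \<and> (NL \<longrightarrow> \<not> le (al (Suc n)) (al n)) \<and> (\<forall>b\<in>D. le (al (Suc n)) b \<longrightarrow> z b \<in> F n (Suc n))" for n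
    using nA[OF alD[of n] normal_nbhd[OF FN[of n]] normal_solid[OF FN[of n]]] stS(1) by simp
  have Fmono1: "F (Suc n) i \<subseteq> F n i" for n i unfolding stS(2) by blast
  have Fmono: "F m i \<subseteq> F n i" if "n \<le> m" for n m i
    using that
  proof (induction m)
    case 0 then show ?case by simp
  next
    case (Suc m)
    then show ?case using Fmono1[of m i] by (metis le_Suc_eq order_refl subset_trans)
  qed
  define W where "W = (\<lambda>m. case m of 0 \<Rightarrow> UNIV | Suc k \<Rightarrow> F k (Suc k))"
  have WN: "normal_solid_seq \<tau> W" unfolding normal_solid_seq_def
  proof (intro allI conjI)
    fix m
    show "nbhd0 \<tau> (W m)" unfolding W_def using nbhd0_UNIV[OF lin] normal_nbhd[OF FN] by (cases m) simp_all
    show "solid (W m)" unfolding W_def using solid_UNIV normal_solid[OF FN] by (cases m) simp_all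
    show "set_plus_vl (W (Suc m)) (W (Suc m)) \<subseteq> W m"
    proof (cases m)
      case 0 then show ?thesis unfolding W_def by simp
    next
      case (Suc k)
      have "set_plus_vl (F (Suc k) (Suc (Suc k))) (F (Suc k) (Suc (Suc k))) \<subseteq> F (Suc k) (Suc k)"
        using FN[of "Suc k"] unfolding normal_solid_seq_def by blast
      also have "\<dots> \<subseteq> F k (Suc k)" by (rule Fmono1)
      finally show ?thesis unfolding W_def Suc by simp
    qed
  qed
  have WF: "(\<Inter>m. W m) \<subseteq> (\<Inter>i. F n i)" for n
  proof
    fix y assume y: "y \<in> (\<Inter>m. W m)"
    have "y \<in> F n i" for i
    proof -
      define M where "M = max n i"
      have "y \<in> W (Suc M)" using y by blast
      then have "y \<in> F M (Suc M)" unfolding W_def by simp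
      also have "\<dots> \<subseteq> F n (Suc M)" by (rule Fmono) (simp add: M_def)
      also have "\<dots> \<subseteq> F n i" by (rule normal_mono[OF FN]) (simp add: M_def)
      finally show ?thesis .
    qed
    then show "y \<in> (\<Inter>i. F n i)" by blast
  qed
  define zz where "zz = (\<lambda>n. z (al n))"
  have zz0: "0 \<le> zz n" for n unfolding zz_def z_def by (rule vabs_nonneg)
  have zzW: "zz n \<in> W n" for n
  proof (cases n)
    case 0 then show ?thesis unfolding W_def by simp
  next
    case (Suc k)
    have "le (al (Suc k)) (al (Suc k))" using Dd(2) alD by blast
    then have "z (al (Suc k)) \<in> F k (Suc k)" using stepP[of k] alD[of "Suc k"] by blast
    then show ?thesis unfolding zz_def W_def Suc by simp
  qed
  have zzd: "zz n \<in> disj_compl (\<Inter>m. W m)" for n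
    unfolding zz_def using zd[of n] dc_mono[OF WF[of n]] by blast
  have "embedded_seq D le al" unfolding embedded_seq_def
    using alD stepP unfolding NL_def by blast
  moreover have "uo_conv (UNIV :: nat set) (\<le>) (x \<circ> al) l" unfolding uo_conv_def
  proof
    fix u
    have "order_conv (UNIV::nat set) (\<le>) (\<lambda>n. inf (zz n) (vabs u)) 0"
      by (rule lemma_star[OF arch lin olb f WN zz0 zzW zzd vabs_nonneg])
    then show "order_conv UNIV (\<le>) (\<lambda>a. inf (vabs ((x \<circ> al) a - l)) (vabs u)) 0"
      unfolding zz_def z_def by simp
  qed
  ultimately show ?thesis by blast
qed

theorem theorem5p6:
  fixes \<tau> :: "'a::{ordered_real_vector,lattice} topology"
  assumes arch: "archimedean_vl TYPE('a)"
    and lin: "linear_topology \<tau>"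
    and ls: "locally_solid \<tau>"
    and olb: "o_lebesgue TYPE('i) \<tau>"
    and big: "\<exists>f :: 'a set \<Rightarrow> 'i. inj f"
  shows "(carrier_top \<tau> = UNIV \<longleftrightarrow> countable_sup_property TYPE('a)) \<and>
    (countable_sup_property TYPE('a) \<longleftrightarrow>
      (\<forall>(D :: 'i set) le x l. directed D le \<and> net_tendsto \<tau> D le x l \<longrightarrow>
         (\<exists>s. embedded_seq D le s \<and> uo_conv (UNIV :: nat set) (\<le>) (x \<circ> s) l))) \<and>
    (countable_sup_property TYPE('a) \<longleftrightarrow>
      (\<forall>(D :: 'i set) le x l. directed D le \<and> (\<forall>a\<in>D. 0 \<le> x a) \<and>
         (\<forall>a\<in>D. \<forall>b\<in>D. le a b \<longrightarrow> x a \<le> x b) \<and> net_tendsto \<tau> D le x l \<longrightarrow>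
         (\<exists>s. embedded_seq D le s \<and> uo_conv (UNIV :: nat set) (\<le>) (x \<circ> s) l)))"
proof -
  obtain f :: "'a set \<Rightarrow> 'i" where f: "inj f" using big by blast
  have c12: "carrier_top \<tau> = UNIV \<longleftrightarrow> countable_sup_property TYPE('a)"
    using carrier_csp[OF lin olb f] csp_carrier[OF arch lin ls olb f] by blast
  have c23: "countable_sup_property TYPE('a) \<Longrightarrow>
      (\<forall>(D :: 'i set) le x l. directed D le \<and> net_tendsto \<tau> D le x l \<longrightarrow>
         (\<exists>s. embedded_seq D le s \<and> uo_conv (UNIV :: nat set) (\<le>) (x \<circ> s) l))"
  proof (intro allI impI, elim conjE)
    fix D :: "'i set" and le x l
    assume csp: "countable_sup_property TYPE('a)" and D: "directed D le" and t: "net_tendsto \<tau> D le x l"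
    have C: "carrier_top \<tau> = UNIV" using csp_carrier[OF arch lin ls olb f csp] .
    show "\<exists>s. embedded_seq D le s \<and> uo_conv (UNIV :: nat set) (\<le>) (x \<circ> s) l"
      by (rule csp_net3[OF arch lin olb f C D t])
  qed
  have c34: "(\<forall>(D :: 'i set) le x l. directed D le \<and> net_tendsto \<tau> D le x l \<longrightarrow>
         (\<exists>s. embedded_seq D le s \<and> uo_conv (UNIV :: nat set) (\<le>) (x \<circ> s) l)) \<Longrightarrow>
      (\<forall>(D :: 'i set) le x l. directed D le \<and> (\<forall>a\<in>D. 0 \<le> x a) \<and>
         (\<forall>a\<in>D. \<forall>b\<in>D. le a b \<longrightarrow> x a \<le> x b) \<and> net_tendsto \<tau> D le x l \<longrightarrow>
         (\<exists>s. embedded_seq D le s \<and> uo_conv (UNIV :: nat set) (\<le>) (x \<circ> s) l))"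
    by blast
  have c42: "(\<forall>(D :: 'i set) le x l. directed D le \<and> (\<forall>a\<in>D. 0 \<le> x a) \<and>
         (\<forall>a\<in>D. \<forall>b\<in>D. le a b \<longrightarrow> x a \<le> x b) \<and> net_tendsto \<tau> D le x l \<longrightarrow>
         (\<exists>s. embedded_seq D le s \<and> uo_conv (UNIV :: nat set) (\<le>) (x \<circ> s) l)) \<Longrightarrow>
      countable_sup_property TYPE('a)"
    by (rule net4_csp[OF olb f])
  show ?thesis
    apply (intro conjI iffI)
    subgoal premises h using c12 h by simp
    subgoal premises h using c12 h by simp
    subgoal premises h by (rule c23[OF h])
    subgoal premises h by (rule c42[OF c34[OF h]])
    subgoal premises h by (rule c34[OF c23[OF h]])
    subgoal premises h by (rule c42[OF h])
    done
qed

end
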